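(* Let $(\Gamma,\gamma)$ be a connected spin network which is not a trivial component, and let $e_0$ be a bridge with $\gamma(e_0)=0$, with endpoints $v_1\ne v_2$. By admissibility the two other half-edges at $v_i$ carry the same decoration $a_i$. Let $\Gamma_1,\Gamma_2$ be the two ribbon graphs (with inherited cyclic orderings and decorations $\gamma_1,\gamma_2$) obtained by deleting $e_0$ and erasing $v_1,v_2$: if the other two half-edges at $v_i$ belong to two distinct edges, these are fused into a single edge decorated $a_i$; if they form a loop at $v_i$, that loop becomes a trivial component decorated $a_i$. Then $$\langle\Gamma,\gamma\rangle^U=\langle\Gamma_1,\gamma_1\rangle^U\,\langle\Gamma_2,\gamma_2\rangle^U\,\delta(v_1)\,\delta(v_2),$$ where $\delta(v_i)=\frac{1}{a_i!\sqrt{a_i+1}}$ if $v_i$ carries a loop and $\delta(v_i)=\frac{1}{\sqrt{a_i+1}}$ otherwise.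
   Context: A cubic ribbon graph $\Gamma=(G,R)$: $G$ a finite graph with all vertices of degree $3$ (multiple edges and loops allowed, a loop counting $2$; a trivial component is a single edge closing on itself with no vertex), $R$ a cyclic ordering of half-edges at each vertex, determining an embedding in a closed orientable surface. A decoration is admissible if at each vertex with incident decorations $a,b,c$ (loop counted twice) $a+b+c$ is even and $|a-b|\le c\le a+b$; a bridge is an edge whose removal disconnects the graph. Penrose evaluation: replace each edge $e$ by $\gamma(e)$ parallel strands on the thickened embedded graph; at each vertex join strands without crossings, $\frac{a+b-c}{2}$ between the $a$- and $b$-edges, $\frac{a+c-b}{2}$ between $a,c$, $\frac{b+c-a}{2}$ between $b,c$; insert $\sigma_e\in\mathfrak S_{\gamma(e)}$ on each edge (for a trivial component with decoration $a$, the $a$ strands form a circle with a permutation inserted); $\langle\Gamma,\gamma\rangle^P=\sum_{\vec\sigma}(\prod_e\mathrm{sign}\,\sigma_e)(-2)^{N(\vec\sigma)}$, $N(\vec\sigma)$ the number of closed curves. Unitary evaluation: $\langle\Gamma,\gamma\rangle^U=\langle\Gamma,\gamma\rangle^P\prod_v[(\frac{a_v+b_v+c_v}{2}+1)!(\frac{a_v+b_v-c_v}{2})!(\frac{a_v+c_v-b_v}{2})!(\frac{b_v+c_v-a_v}{2})!]^{-1/2}$ over vertices $v$ with decorations $a_v,b_v,c_v$ (so for a trivial component $\langle\cdot\rangle^U=\langle\cdot\rangle^P$). *)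

theory Defs
  imports Complex_Main "HOL-Combinatorics.Permutations"
begin

(* A cubic ribbon graph is encoded by its set of half-edges (darts) H,
   the rotation s (cyclic order at vertices; every vertex = s-orbit of length 3)
   and the fixed-point free involution al (the two halves of each edge).
   Trivial components (edges closing on themselves, no vertex) are encoded by a
   separate set C of identifiers, disjoint from H. *)

definition cubic_ribbon :: "'d set \<Rightarrow> ('d \<Rightarrow> 'd) \<Rightarrow> ('d \<Rightarrow> 'd) \<Rightarrow> bool" where
  "cubic_ribbon H s al \<longleftrightarrow> finite H \<and> s permutes H \<and> al permutes H \<and>
     (\<forall>h\<in>H. s h \<noteq> h \<and> s (s (s h)) = h \<and> al h \<noteq> h \<and> al (al h) = h)"

definition admissible :: "'d set \<Rightarrow> ('d \<Rightarrow> 'd) \<Rightarrow> ('d \<Rightarrow> 'd) \<Rightarrow> ('d \<Rightarrow> nat) \<Rightarrow> bool" where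
  "admissible H s al g \<longleftrightarrow>
     (\<forall>h\<in>H. g (al h) = g h) \<and>
     (\<forall>h\<in>H. let a = g h; b = g (s h); c = g (s (s h)) in
        even (a + b + c) \<and> \<bar>int a - int b\<bar> \<le> int c \<and> c \<le> a + b)"

definition verts :: "'d set \<Rightarrow> ('d \<Rightarrow> 'd) \<Rightarrow> 'd set set" where
  "verts H s = (\<lambda>h. {h, s h, s (s h)}) ` H"

definition edges :: "'d set \<Rightarrow> ('d \<Rightarrow> 'd) \<Rightarrow> 'd set \<Rightarrow> 'd set set" where
  "edges H al C = (\<lambda>h. {h, al h}) ` H \<union> (\<lambda>c. {c}) ` C"

definition erep :: "'d set \<Rightarrow> 'd" where
  "erep e = (SOME h. h \<in> e)"

(* strand ends: strand number i (0 \<le> i < g h) on half-edge h, numbered from the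
   right when looking outward from the vertex along h *)
definition strand_ends :: "'d set \<Rightarrow> 'd set \<Rightarrow> ('d \<Rightarrow> nat) \<Rightarrow> ('d \<times> nat) set" where
  "strand_ends H C g = {(h, i). h \<in> H \<union> C \<and> i < g h}"

(* planar (crossing-free) connection of strands at the vertices:
   (g p + g h - g (s h)) / 2 strands join h with its predecessor p = s (s h),
   the remaining ones join h with s h *)
definition vconn :: "'d set \<Rightarrow> ('d \<Rightarrow> 'd) \<Rightarrow> ('d \<Rightarrow> nat) \<Rightarrow> 'd \<times> nat \<Rightarrow> 'd \<times> nat" where
  "vconn H s g x = (case x of (h, i) \<Rightarrow>
     if h \<in> H then
       (let p = s (s h); k = (g p + g h - g (s h)) div 2 in
        if i < k then (p, g p - 1 - i) else (s h, g h - 1 - i))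
     else (h, i))"

(* connection along the edges, with the permutation P e inserted on edge e;
   the identity permutation means parallel strands *)
definition econn :: "'d set \<Rightarrow> ('d \<Rightarrow> 'd) \<Rightarrow> ('d \<Rightarrow> nat)
     \<Rightarrow> ('d set \<Rightarrow> nat \<Rightarrow> nat) \<Rightarrow> 'd \<times> nat \<Rightarrow> 'd \<times> nat" where
  "econn C al g P x = (case x of (h, i) \<Rightarrow>
     if h \<in> C then (h, P {h} i)
     else (let e = {h, al h}; \<pi> = P e in
           if h = erep e then (al h, g h - 1 - \<pi> i)
           else (al h, inv \<pi> (g h - 1 - i))))"

definition perm_assignments :: "'d set \<Rightarrow> ('d \<Rightarrow> 'd) \<Rightarrow> 'd set \<Rightarrow> ('d \<Rightarrow> nat)
     \<Rightarrow> ('d set \<Rightarrow> nat \<Rightarrow> nat) set" where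
  "perm_assignments H al C g =
     Pi\<^sub>E (edges H al C) (\<lambda>e. {\<pi>. \<pi> permutes {..< g (erep e)}})"

definition strand_rel :: "'d set \<Rightarrow> ('d \<Rightarrow> 'd) \<Rightarrow> ('d \<Rightarrow> 'd) \<Rightarrow> 'd set \<Rightarrow> ('d \<Rightarrow> nat)
     \<Rightarrow> ('d set \<Rightarrow> nat \<Rightarrow> nat) \<Rightarrow> (('d \<times> nat) \<times> ('d \<times> nat)) set" where
  "strand_rel H s al C g P =
     {(x, vconn H s g x) | x. x \<in> strand_ends H C g} \<union>
     {(x, econn C al g P x) | x. x \<in> strand_ends H C g}"

definition ncurves :: "'d set \<Rightarrow> ('d \<Rightarrow> 'd) \<Rightarrow> ('d \<Rightarrow> 'd) \<Rightarrow> 'd set \<Rightarrow> ('d \<Rightarrow> nat)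
     \<Rightarrow> ('d set \<Rightarrow> nat \<Rightarrow> nat) \<Rightarrow> nat" where
  "ncurves H s al C g P = card (strand_ends H C g // (strand_rel H s al C g P)\<^sup>*)"

definition penrose :: "'d set \<Rightarrow> ('d \<Rightarrow> 'd) \<Rightarrow> ('d \<Rightarrow> 'd) \<Rightarrow> 'd set \<Rightarrow> ('d \<Rightarrow> nat) \<Rightarrow> real" where
  "penrose H s al C g =
     (\<Sum>P\<in>perm_assignments H al C g.
        (\<Prod>e\<in>edges H al C. real_of_int (sign (P e))) * (-2) ^ ncurves H s al C g P)"

definition vfactor :: "('d \<Rightarrow> 'd) \<Rightarrow> ('d \<Rightarrow> nat) \<Rightarrow> 'd set \<Rightarrow> real" where
  "vfactor s g v = (let h = erep v; a = g h; b = g (s h); c = g (s (s h)) in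
     fact ((a + b + c) div 2 + 1) * fact ((a + b - c) div 2) *
     fact ((a + c - b) div 2) * fact ((b + c - a) div 2))"

definition unitary :: "'d set \<Rightarrow> ('d \<Rightarrow> 'd) \<Rightarrow> ('d \<Rightarrow> 'd) \<Rightarrow> 'd set \<Rightarrow> ('d \<Rightarrow> nat) \<Rightarrow> real" where
  "unitary H s al C g = penrose H s al C g * (\<Prod>v\<in>verts H s. 1 / sqrt (vfactor s g v))"

definition dart_rel :: "'d set \<Rightarrow> ('d \<Rightarrow> 'd) \<Rightarrow> ('d \<Rightarrow> 'd) \<Rightarrow> ('d \<times> 'd) set" where
  "dart_rel H s al = {(x, s x) | x. x \<in> H} \<union> {(x, al x) | x. x \<in> H}"

definition ribbon_connected :: "'d set \<Rightarrow> ('d \<Rightarrow> 'd) \<Rightarrow> ('d \<Rightarrow> 'd) \<Rightarrow> bool" where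
  "ribbon_connected H s al \<longleftrightarrow> (\<forall>x\<in>H. \<forall>y\<in>H. (x, y) \<in> (dart_rel H s al)\<^sup>*)"

definition dart_rel_minus :: "'d set \<Rightarrow> ('d \<Rightarrow> 'd) \<Rightarrow> ('d \<Rightarrow> 'd) \<Rightarrow> 'd \<Rightarrow> ('d \<times> 'd) set" where
  "dart_rel_minus H s al h0 =
     {(x, s x) | x. x \<in> H} \<union> {(x, al x) | x. x \<in> H - {h0, al h0}}"

definition is_bridge :: "'d set \<Rightarrow> ('d \<Rightarrow> 'd) \<Rightarrow> ('d \<Rightarrow> 'd) \<Rightarrow> 'd \<Rightarrow> bool" where
  "is_bridge H s al h0 \<longleftrightarrow> h0 \<in> H \<and>
     \<not> (\<forall>x\<in>H. \<forall>y\<in>H. (x, y) \<in> (dart_rel_minus H s al h0)\<^sup>*)"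

definition side :: "'d set \<Rightarrow> ('d \<Rightarrow> 'd) \<Rightarrow> ('d \<Rightarrow> 'd) \<Rightarrow> 'd \<Rightarrow> 'd \<Rightarrow> 'd set" where
  "side H s al h0 h = {x \<in> H. (h, x) \<in> (dart_rel_minus H s al h0)\<^sup>*}"

definition loop_at :: "('d \<Rightarrow> 'd) \<Rightarrow> ('d \<Rightarrow> 'd) \<Rightarrow> 'd \<Rightarrow> bool" where
  "loop_at s al h \<longleftrightarrow> al (s h) = s (s h)"

(* the piece Gamma_i obtained on the side of the half-edge h, after erasing the
   vertex of h: if loop there, a trivial component (identifier s h, decoration
   g (s h)); otherwise the edges through s h and s (s h) are fused *)
definition piece_darts :: "'d set \<Rightarrow> ('d \<Rightarrow> 'd) \<Rightarrow> ('d \<Rightarrow> 'd) \<Rightarrow> 'd \<Rightarrow> 'd \<Rightarrow> 'd set" where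
  "piece_darts H s al h0 h =
     (if loop_at s al h then {} else side H s al h0 h - {h, s h, s (s h)})"

definition piece_circles :: "('d \<Rightarrow> 'd) \<Rightarrow> ('d \<Rightarrow> 'd) \<Rightarrow> 'd \<Rightarrow> 'd set" where
  "piece_circles s al h = (if loop_at s al h then {s h} else {})"

definition piece_al :: "('d \<Rightarrow> 'd) \<Rightarrow> ('d \<Rightarrow> 'd) \<Rightarrow> 'd \<Rightarrow> 'd \<Rightarrow> 'd" where
  "piece_al s al h x =
     (if x = al (s h) then al (s (s h))
      else if x = al (s (s h)) then al (s h)
      else al x)"

definition delta :: "('d \<Rightarrow> 'd) \<Rightarrow> ('d \<Rightarrow> 'd) \<Rightarrow> ('d \<Rightarrow> nat) \<Rightarrow> 'd \<Rightarrow> real" where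
  "delta s al g h = (let a = g (s h) in
     if loop_at s al h then 1 / (fact a * sqrt (real a + 1)) else 1 / sqrt (real a + 1))"

end

theory Submission
  imports Defs
begin


lemma card_image_same_kernel:
  assumes "finite E" "\<And>x y. x\<in>E \<Longrightarrow> y\<in>E \<Longrightarrow> k1 x = k1 y \<longleftrightarrow> k2 x = k2 y"
  shows "card (k1 ` E) = card (k2 ` E)"
proof -
  let ?K = "(\<lambda>x. (k1 x, k2 x)) ` E"
  have i1: "inj_on fst ?K" using assms(2) by (auto simp: inj_on_def)
  have i2: "inj_on snd ?K" using assms(2) by (auto simp: inj_on_def)
  have "k1 ` E = fst ` ?K" "k2 ` E = snd ` ?K" by (auto simp: image_image)
  then show ?thesis using card_image[OF i1] card_image[OF i2] by simp
qed

lemma quotient_image: "A // R = (\<lambda>x. R``{x}) ` A"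
  by (auto simp: quotient_def)

lemma rtrancl_class_eq: "(r\<^sup>*)``{x} = (r\<^sup>*)``{y} \<longleftrightarrow> (x,y) \<in> r\<^sup>* \<and> (y,x) \<in> r\<^sup>*"
  by (auto intro: rtrancl_trans)

lemma card_quotient_map:
  assumes fin: "finite E" and img: "f ` E = E'"
    and iff: "\<And>x y. x \<in> E \<Longrightarrow> y \<in> E \<Longrightarrow> (x,y) \<in> r\<^sup>* \<longleftrightarrow> (f x, f y) \<in> r'\<^sup>*"
  shows "card (E // r\<^sup>*) = card (E' // r'\<^sup>*)"
proof -
  have "E' // r'\<^sup>* = (\<lambda>x. (r'\<^sup>*)``{f x}) ` E"
    unfolding quotient_image img[symmetric] by (simp add: image_image)
  moreover have "card ((\<lambda>x. (r\<^sup>*)``{x}) ` E) = card ((\<lambda>x. (r'\<^sup>*)``{f x}) ` E)"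
    by (rule card_image_same_kernel[OF fin]) (auto simp: rtrancl_class_eq iff)
  ultimately show ?thesis by (simp add: quotient_image)
qed

lemma card_quotient_split:
  assumes fin: "finite E" and E: "E = E1 \<union> E2" and dis: "E1 \<inter> E2 = {}"
   and c1: "\<And>x y. x \<in> E1 \<Longrightarrow> (x,y) \<in> r\<^sup>* \<Longrightarrow> y \<in> E1"
   and c2: "\<And>x y. x \<in> E2 \<Longrightarrow> (x,y) \<in> r\<^sup>* \<Longrightarrow> y \<in> E2"
  shows "card (E // r\<^sup>*) = card (E1 // r\<^sup>*) + card (E2 // r\<^sup>*)"
proof -
  have q: "E // r\<^sup>* = E1 // r\<^sup>* \<union> E2 // r\<^sup>*" by (simp add: E quotient_def)
  have d: "E1 // r\<^sup>* \<inter> E2 // r\<^sup>* = {}"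
  proof (rule ccontr)
    assume "E1 // r\<^sup>* \<inter> E2 // r\<^sup>* \<noteq> {}"
    then obtain x y where xy: "x \<in> E1" "y \<in> E2" "(r\<^sup>*)``{x} = (r\<^sup>*)``{y}"
      by (auto simp: quotient_def)
    then have "(x,y) \<in> r\<^sup>*" by (auto simp: rtrancl_class_eq)
    with c1 xy(1) have "y \<in> E1" by blast
    with xy(2) dis show False by blast
  qed
  have f1: "finite (E1 // r\<^sup>*)" "finite (E2 // r\<^sup>*)"
    using fin E by (auto simp: quotient_image)
  show ?thesis using q d f1 by (simp add: card_Un_disjoint)
qed

definition rv :: "nat \<Rightarrow> nat \<Rightarrow> nat" where "rv n i = (if i < n then n - 1 - i else i)"

lemma rv_rv [simp]: "rv n (rv n i) = i"
  by (auto simp: rv_def)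

lemma rv_o_rv: "rv n \<circ> rv n = id"
  by (auto simp: fun_eq_iff)

lemma rv_permutes: "rv n permutes {..<n}"
proof -
  have "\<forall>y. \<exists>!x. rv n x = y"
  proof
    fix y show "\<exists>!x. rv n x = y"
    proof (rule ex1I[of _ "rv n y"])
      fix x assume "rv n x = y"
      then have "rv n (rv n x) = rv n y" by simp
      then show "x = rv n y" by simp
    qed simp
  qed
  moreover have "\<forall>x. x \<notin> {..<n} \<longrightarrow> rv n x = x" by (simp add: rv_def)
  ultimately show ?thesis by (simp add: permutes_def)
qed

lemma inv_rv: "inv (rv n) = rv n"
  using inv_unique_comp[OF rv_o_rv rv_o_rv] .

lemma rv_lt: "i < n \<Longrightarrow> rv n i = n - 1 - i" by (simp add: rv_def)

lemma erep_in: "erep {u, v} \<in> {u, v}"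
  unfolding erep_def by (rule someI[of _ u]) simp

definition tr :: "('d \<Rightarrow> 'd) \<Rightarrow> 'd \<Rightarrow> nat \<Rightarrow> (nat \<Rightarrow> nat) \<Rightarrow> nat \<Rightarrow> nat" where
  "tr al u n \<pi> = (if u = erep {u, al u} then rv n \<circ> \<pi> else inv \<pi> \<circ> rv n)"

lemma tr_permutes: "\<pi> permutes {..<n} \<Longrightarrow> tr al u n \<pi> permutes {..<n}"
  unfolding tr_def using permutes_compose[OF _ rv_permutes] permutes_compose[OF rv_permutes permutes_inv] by auto

lemma perm_of: "(\<pi>::nat\<Rightarrow>nat) permutes {..<n} \<Longrightarrow> permutation \<pi>"
  using permutes_imp_permutation[OF finite_lessThan] by blast

lemma sign_tr: "\<pi> permutes {..<n} \<Longrightarrow> sign (tr al u n \<pi>) = sign (rv n) * sign \<pi>"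
proof -
  assume a: "\<pi> permutes {..<n}"
  have p1: "permutation (rv n)" "permutation \<pi>" "permutation (inv \<pi>)"
    using perm_of[OF rv_permutes] perm_of[OF a] perm_of[OF permutes_inv[OF a]] by auto
  show ?thesis unfolding tr_def
    using sign_compose[OF p1(1) p1(2)] sign_compose[OF p1(3) p1(1)] sign_inverse[OF p1(2)]
    by (simp add: mult.commute)
qed

lemma inv_comp_perm:
  "p permutes S \<Longrightarrow> q permutes S \<Longrightarrow> inv (p \<circ> q) = inv q \<circ> inv p"
  by (simp add: o_inv_distrib permutes_bij)

lemma tr_al:
  assumes "al (al u) = u" "u \<noteq> al u" "\<pi> permutes {..<n}"
  shows "tr al (al u) n \<pi> = inv (tr al u n \<pi>)"
proof -
  have e: "{al u, al (al u)} = {u, al u}" using assms(1) by auto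
  have er: "erep {u, al u} \<in> {u, al u}" by (rule erep_in)
  show ?thesis
  proof (cases "u = erep {u, al u}")
    case True
    then have "al u \<noteq> erep {u, al u}" using assms(2) by auto
    moreover have "inv (rv n \<circ> \<pi>) = inv \<pi> \<circ> inv (rv n)"
      using inv_comp_perm[OF rv_permutes assms(3)] .
    ultimately show ?thesis using True e by (simp add: tr_def inv_rv)
  next
    case False
    then have "al u = erep {u, al u}" using er by auto
    moreover have "inv (inv \<pi> \<circ> rv n) = inv (rv n) \<circ> inv (inv \<pi>)"
      using inv_comp_perm[OF permutes_inv[OF assms(3)] rv_permutes] .
    ultimately show ?thesis using False e assms(3)
      by (simp add: tr_def inv_rv permutes_inv_inv)
  qed
qed

lemma tr_inj:
  assumes "\<pi> permutes {..<n}" "\<pi>' permutes {..<n}" "tr al u n \<pi> = tr al u n \<pi>'"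
  shows "\<pi> = \<pi>'"
proof (cases "u = erep {u, al u}")
  case True
  then have "rv n \<circ> (rv n \<circ> \<pi>) = rv n \<circ> (rv n \<circ> \<pi>')" using assms(3) by (simp add: tr_def)
  then show ?thesis by (simp add: o_assoc rv_o_rv)
next
  case False
  then have "inv \<pi> \<circ> rv n \<circ> rv n = inv \<pi>' \<circ> rv n \<circ> rv n" using assms(3) by (simp add: tr_def)
  then have "inv \<pi> = inv \<pi>'" by (simp add: comp_assoc rv_o_rv)
  then show ?thesis using assms(1,2) by (metis permutes_inv_inv)
qed

lemma tr_lt: "\<pi> permutes {..<n} \<Longrightarrow> i < n \<Longrightarrow> tr al u n \<pi> i < n"
  using tr_permutes permutes_in_image by (metis lessThan_iff)

lemma econn_tr:
  assumes "u \<notin> C" "i < g u" "P {u, al u} permutes {..<g u}"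
  shows "econn C al g P (u,i) = (al u, tr al u (g u) (P {u, al u}) i)"
proof -
  have "P {u, al u} i < g u" using assms(2,3) permutes_in_image by (metis lessThan_iff)
  then show ?thesis using assms by (auto simp: econn_def tr_def Let_def rv_def)
qed

lemma econn_invol:
  assumes "u \<notin> C" "al u \<notin> C" "al (al u) = u" "u \<noteq> al u" "g (al u) = g u"
    "P {u, al u} permutes {..<g u}" "i < g u"
  shows "econn C al g P (u,i) = (al u, tr al u (g u) (P {u, al u}) i)"
    "tr al u (g u) (P {u, al u}) i < g u"
    "econn C al g P (al u, tr al u (g u) (P {u, al u}) i) = (u, i)"
proof -
  let ?\<pi> = "P {u, al u}"
  show 1: "econn C al g P (u,i) = (al u, tr al u (g u) ?\<pi> i)" using econn_tr[of u C i g P al] assms by simp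
  show 2: "tr al u (g u) ?\<pi> i < g u" by (rule tr_lt[OF assms(6,7)])
  have e: "{al u, al (al u)} = {u, al u}" using assms(3) by auto
  have "econn C al g P (al u, tr al u (g u) ?\<pi> i) = (al (al u), tr al (al u) (g u) ?\<pi> (tr al u (g u) ?\<pi> i))"
    using econn_tr[of "al u" C "tr al u (g u) ?\<pi> i" g P al] assms 2 e by simp
  also have "\<dots> = (u, i)"
    using tr_al[OF assms(3,4,6)] assms(3) permutes_inverses(2)[OF tr_permutes[OF assms(6)]]
    by simp
  finally show "econn C al g P (al u, tr al u (g u) ?\<pi> i) = (u, i)" .
qed


locale bs =
  fixes H :: "'d set" and s al :: "'d \<Rightarrow> 'd" and g :: "'d \<Rightarrow> nat" and h0 :: 'd
  assumes cub: "cubic_ribbon H s al" and adm: "admissible H s al g"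
    and conn: "ribbon_connected H s al" and br: "is_bridge H s al h0"
    and g0: "g h0 = 0" and nl: "al h0 \<notin> {h0, s h0, s (s h0)}"
begin

lemma finH: "finite H" using cub by (simp add: cubic_ribbon_def)
lemma s_perm: "s permutes H" using cub by (simp add: cubic_ribbon_def)
lemma al_perm: "al permutes H" using cub by (simp add: cubic_ribbon_def)
lemma sH: "x \<in> H \<Longrightarrow> s x \<in> H" using s_perm by (simp add: permutes_in_image)
lemma alH: "x \<in> H \<Longrightarrow> al x \<in> H" using al_perm by (simp add: permutes_in_image)
lemma s_ne: "x \<in> H \<Longrightarrow> s x \<noteq> x" using cub by (simp add: cubic_ribbon_def)
lemma s3: "x \<in> H \<Longrightarrow> s (s (s x)) = x" using cub by (simp add: cubic_ribbon_def)
lemma al_ne: "x \<in> H \<Longrightarrow> al x \<noteq> x" using cub by (simp add: cubic_ribbon_def)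
lemma al2: "x \<in> H \<Longrightarrow> al (al x) = x" using cub by (simp add: cubic_ribbon_def)
lemma s_inj: "s x = s y \<Longrightarrow> x = y" using permutes_inj[OF s_perm] by (simp add: inj_eq)
lemma al_inj: "al x = al y \<Longrightarrow> x = y" using permutes_inj[OF al_perm] by (simp add: inj_eq)
lemma ss_ne: "x \<in> H \<Longrightarrow> s (s x) \<noteq> x" using s3 s_ne by metis
lemma ss_ne2: "x \<in> H \<Longrightarrow> s (s x) \<noteq> s x" using s_inj s_ne by metis
lemma g_al: "x \<in> H \<Longrightarrow> g (al x) = g x" using adm by (simp add: admissible_def)
lemma adm_at: "x \<in> H \<Longrightarrow> even (g x + g (s x) + g (s (s x))) \<and>
   \<bar>int (g x) - int (g (s x))\<bar> \<le> int (g (s (s x))) \<and> g (s (s x)) \<le> g x + g (s x)"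
  using adm by (simp add: admissible_def Let_def)

lemma h0H: "h0 \<in> H" using br by (simp add: is_bridge_def)

abbreviation drm where "drm \<equiv> dart_rel_minus H s al h0"

lemma drm_sym: assumes "(x,y) \<in> drm" shows "(y,x) \<in> drm\<^sup>*"
proof -
  have x: "x \<in> H" using assms by (auto simp: dart_rel_minus_def)
  consider "y = s x" | "y = al x" "x \<noteq> h0" "x \<noteq> al h0" using assms by (auto simp: dart_rel_minus_def)
  then show ?thesis
  proof cases
    case 1
    have "(s x, s (s x)) \<in> drm" "(s (s x), s (s (s x))) \<in> drm" using x sH by (auto simp: dart_rel_minus_def)
    then show ?thesis using s3[OF x] 1 by (metis converse_rtrancl_into_rtrancl r_into_rtrancl)
  next
    case 2
    then have "al x \<in> H" "al x \<noteq> h0" "al x \<noteq> al h0" using alH al2 h0H x by metis+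
    then have "(al x, al (al x)) \<in> drm" by (auto simp: dart_rel_minus_def)
    then show ?thesis using al2[OF x] 2 by auto
  qed
qed

lemma drm_rt_sym: "(x,y) \<in> drm\<^sup>* \<Longrightarrow> (y,x) \<in> drm\<^sup>*"
proof (induction rule: rtrancl_induct)
  case base then show ?case by simp
next
  case (step y z) then show ?case using drm_sym by (meson rtrancl_trans)
qed

lemma drm_H: "(x,y) \<in> drm \<Longrightarrow> y \<in> H"
  by (auto simp: dart_rel_minus_def sH alH)

lemma side_closed: assumes "x \<in> side H s al h0 h" "(x,y) \<in> drm\<^sup>*" shows "y \<in> side H s al h0 h"
  using assms(2)
proof (induction rule: rtrancl_induct)
  case base then show ?case using assms(1) .
next
  case (step y z) then show ?case using drm_H by (auto simp: side_def intro: rtrancl_into_rtrancl)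
qed

lemma side_self: "h \<in> H \<Longrightarrow> h \<in> side H s al h0 h" by (simp add: side_def)

lemma side_s: "x \<in> side H s al h0 h \<Longrightarrow> s x \<in> side H s al h0 h"
  by (rule side_closed) (auto simp: side_def dart_rel_minus_def)

lemma side_al: "x \<in> side H s al h0 h \<Longrightarrow> x \<noteq> h0 \<Longrightarrow> x \<noteq> al h0 \<Longrightarrow> al x \<in> side H s al h0 h"
  by (rule side_closed) (auto simp: side_def dart_rel_minus_def)

lemma side_H: "side H s al h0 h \<subseteq> H" by (auto simp: side_def)

lemma sides_union: "H = side H s al h0 h0 \<union> side H s al h0 (al h0)"
proof
  show "side H s al h0 h0 \<union> side H s al h0 (al h0) \<subseteq> H" using side_H by auto
next
  show "H \<subseteq> side H s al h0 h0 \<union> side H s al h0 (al h0)"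
  proof
    fix x assume x: "x \<in> H"
    have "(h0, x) \<in> (dart_rel H s al)\<^sup>*" using conn x h0H by (simp add: ribbon_connected_def)
    then show "x \<in> side H s al h0 h0 \<union> side H s al h0 (al h0)"
    proof (induction rule: rtrancl_induct)
      case base then show ?case using side_self h0H by auto
    next
      case (step y z)
      show ?case
      proof (cases "(y,z) \<in> drm")
        case True then show ?thesis using step.IH side_closed by blast
      next
        case False
        then have "z = al y" "y = h0 \<or> y = al h0" using step.hyps(2)
          by (auto simp: dart_rel_def dart_rel_minus_def)
        then show ?thesis using side_self h0H alH al2 by auto
      qed
    qed
  qed
qed

lemma sides_disjoint: "side H s al h0 h0 \<inter> side H s al h0 (al h0) = {}"
proof (rule ccontr)
  assume "side H s al h0 h0 \<inter> side H s al h0 (al h0) \<noteq> {}"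
  then obtain x where "(h0, x) \<in> drm\<^sup>*" "(al h0, x) \<in> drm\<^sup>*" by (auto simp: side_def)
  then have ha: "(h0, al h0) \<in> drm\<^sup>*" using drm_rt_sym by (meson rtrancl_trans)
  have all: "(h0, y) \<in> drm\<^sup>*" if "y \<in> H" for y
    using that sides_union ha by (auto simp: side_def intro: rtrancl_trans)
  have "\<forall>x\<in>H. \<forall>y\<in>H. (x, y) \<in> drm\<^sup>*"
    using all drm_rt_sym by (meson rtrancl_trans)
  then show False using br by (simp add: is_bridge_def)
qed

lemma h0_not_V2: "h0 \<notin> {al h0, s (al h0), s (s (al h0))}"
proof -
  have H: "al h0 \<in> H" using alH h0H by auto
  have "h0 \<noteq> al h0" using al_ne h0H by metis
  moreover have "h0 \<noteq> s (al h0)"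
  proof
    assume "h0 = s (al h0)"
    then have "s (s h0) = al h0" using s3[OF H] by simp
    then show False using nl by auto
  qed
  moreover have "h0 \<noteq> s (s (al h0))"
  proof
    assume "h0 = s (s (al h0))"
    then have "s h0 = al h0" using s3[OF H] by simp
    then show False using nl by auto
  qed
  ultimately show ?thesis by auto
qed

end


lemma tri_div:
  fixes a b c :: nat
  assumes "even(a+b+c)" "a \<le> b+c" "b \<le> a+c" "c \<le> a+b"
  obtains m where "a+b+c = 2*m" "(c+a-b) div 2 = m - b" "(b+c-a) div 2 = m - a" "(a+b-c) div 2 = m - c"
    "a \<le> m" "b \<le> m" "c \<le> m"
proof -
  from assms(1) obtain m where m: "a+b+c = 2*m" by (rule evenE)
  have "c+a-b = 2*(m-b)" "b+c-a = 2*(m-a)" "a+b-c = 2*(m-c)" using m assms by auto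
  then show ?thesis using that m assms by auto
qed

lemma vc_arith1:
  fixes a b c i :: nat
  assumes "even(a+b+c)" "a \<le> b+c" "b \<le> a+c" "c \<le> a+b" "i < a" "i < (c+a-b) div 2"
  shows "c-1-i < c \<and> \<not> (c-1-i < (b+c-a) div 2) \<and> c-1-(c-1-i) = i"
proof -
  obtain m where "a+b+c = 2*m" "(c+a-b) div 2 = m - b" "(b+c-a) div 2 = m - a" "(a+b-c) div 2 = m - c"
    "a \<le> m" "b \<le> m" "c \<le> m" using tri_div[OF assms(1-4)] by blast
  note h = this
  have i1: "i < m - b" using h(2) assms(6) by simp
  have ic: "i < c" using i1 h(1) h(5-7) by linarith
  have "c - 1 - i < c" using ic by linarith
  moreover have "\<not> (c-1-i < m - a)" using i1 h(1) h(5-7) ic by linarith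
  moreover have "c-1-(c-1-i) = i" using ic by linarith
  ultimately show ?thesis using h(3) by simp
qed

lemma vc_arith2:
  fixes a b c i :: nat
  assumes "even(a+b+c)" "a \<le> b+c" "b \<le> a+c" "c \<le> a+b" "i < a" "\<not> i < (c+a-b) div 2"
  shows "a-1-i < b \<and> a-1-i < (a+b-c) div 2 \<and> a-1-(a-1-i) = i"
proof -
  obtain m where "a+b+c = 2*m" "(c+a-b) div 2 = m - b" "(b+c-a) div 2 = m - a" "(a+b-c) div 2 = m - c"
    "a \<le> m" "b \<le> m" "c \<le> m" using tri_div[OF assms(1-4)] by blast
  note h = this
  have i1: "\<not> i < m - b" using h(2) assms(6) by simp
  have "a-1-i < b" using i1 h(1) h(5-7) assms(5) by linarith
  moreover have "a-1-i < m - c" using i1 h(1) h(5-7) assms(5) by linarith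
  moreover have "a-1-(a-1-i) = i" using assms(5) by linarith
  ultimately show ?thesis using h(4) by simp
qed

context bs begin

lemma vconn_invol:
  assumes u: "u \<in> H" and i: "i < g u"
  shows "fst (vconn H s g (u,i)) \<in> {s u, s (s u)}"
    "snd (vconn H s g (u,i)) < g (fst (vconn H s g (u,i)))"
    "vconn H s g (vconn H s g (u,i)) = (u,i)"
proof -
  define a b c where "a = g u" "b = g (s u)" "c = g (s (s u))"
  have t: "even (a+b+c)" "a \<le> b+c" "b \<le> a+c" "c \<le> a+b"
    using adm_at[OF u] unfolding a_b_c_def by auto
  have ssH: "s (s u) \<in> H" "s u \<in> H" using sH u by auto
  have s4: "s (s (s (s u))) = s u" using s3[OF ssH(2)] .
  have s3u: "s (s (s u)) = u" using s3[OF u] .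
  have "fst (vconn H s g (u,i)) \<in> {s u, s (s u)} \<and>
    snd (vconn H s g (u,i)) < g (fst (vconn H s g (u,i))) \<and>
    vconn H s g (vconn H s g (u,i)) = (u,i)"
  proof (cases "i < (c + a - b) div 2")
    case True
    note ar = vc_arith1[OF t i[folded a_b_c_def(1)] True]
    have v1: "vconn H s g (u,i) = (s (s u), c - 1 - i)"
      using True u by (simp add: vconn_def a_b_c_def Let_def)
    have "vconn H s g (s (s u), c - 1 - i) = (u, c - 1 - (c - 1 - i))"
      using ar ssH s4 s3u by (simp add: vconn_def a_b_c_def Let_def add.commute)
    then show ?thesis using v1 ar by (simp add: a_b_c_def)
  next
    case False
    note ar = vc_arith2[OF t i[folded a_b_c_def(1)] False]
    have v1: "vconn H s g (u,i) = (s u, a - 1 - i)"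
      using False u by (simp add: vconn_def a_b_c_def Let_def)
    have "vconn H s g (s u, a - 1 - i) = (u, a - 1 - (a - 1 - i))"
      using ar ssH s3u by (simp add: vconn_def a_b_c_def Let_def add.commute)
    then show ?thesis using v1 ar by (simp add: a_b_c_def)
  qed
  then show "fst (vconn H s g (u,i)) \<in> {s u, s (s u)}"
    "snd (vconn H s g (u,i)) < g (fst (vconn H s g (u,i)))"
    "vconn H s g (vconn H s g (u,i)) = (u,i)" by auto
qed

end


context bs begin

lemma strand_ends_Sigma: "strand_ends H' C g' = Sigma (H' \<union> C) (\<lambda>h. {..<g' h})"
  by (auto simp: strand_ends_def)

lemma edge_in: "u \<in> H \<Longrightarrow> {u, al u} \<in> edges H al C"
  by (auto simp: edges_def)

lemma P_edge:
  assumes "P \<in> perm_assignments H al C g" "u \<in> H"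
  shows "P {u, al u} permutes {..<g u}"
proof -
  have "P {u, al u} permutes {..<g (erep {u, al u})}"
    using assms edge_in[OF assms(2)] by (auto simp: perm_assignments_def PiE_iff)
  moreover have "g (erep {u, al u}) = g u" using erep_in[of u "al u"] g_al[OF assms(2)] by auto
  ultimately show ?thesis by simp
qed

abbreviation EE where "EE \<equiv> strand_ends H {} g"
abbreviation rr where "rr P \<equiv> strand_rel H s al {} g P"

lemma finEE: "finite EE" using finH by (simp add: strand_ends_Sigma)

lemma econn_G:
  assumes "P \<in> perm_assignments H al {} g" "u \<in> H" "i < g u"
  shows "econn {} al g P (u,i) = (al u, tr al u (g u) (P {u, al u}) i)"
    "tr al u (g u) (P {u, al u}) i < g u"
    "econn {} al g P (al u, tr al u (g u) (P {u, al u}) i) = (u, i)"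
proof -
  have "u \<noteq> al u" using al_ne[OF assms(2)] by metis
  then show "econn {} al g P (u,i) = (al u, tr al u (g u) (P {u, al u}) i)"
    "tr al u (g u) (P {u, al u}) i < g u"
    "econn {} al g P (al u, tr al u (g u) (P {u, al u}) i) = (u, i)"
    using econn_invol[of u "{}" al g P i] assms al2[OF assms(2)] g_al[OF assms(2)] P_edge[OF assms(1,2)] by auto
qed

lemma rr_sym:
  assumes P: "P \<in> perm_assignments H al {} g" and xy: "(x,y) \<in> rr P"
  shows "y \<in> EE \<and> (y,x) \<in> rr P"
proof -
  obtain u i where x: "x = (u,i)" "u \<in> H" "i < g u" and
    y: "y = vconn H s g x \<or> y = econn {} al g P x" using xy by (auto simp: strand_rel_def strand_ends_def)
  from y show ?thesis
  proof
    assume y: "y = vconn H s g x"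
    note v = vconn_invol[OF x(2,3)]
    have "y \<in> EE" using v(1,2) x y sH[OF x(2)] sH[OF sH[OF x(2)]] by (cases y) (auto simp: strand_ends_def)
    moreover have "vconn H s g y = x" using v(3) x y by simp
    moreover have "(y, vconn H s g y) \<in> rr P" using \<open>y \<in> EE\<close> unfolding strand_rel_def by blast
    ultimately show ?thesis by simp
  next
    assume y: "y = econn {} al g P x"
    note e = econn_G[OF P x(2,3)]
    have "y \<in> EE" using e(1,2) x y alH g_al by (auto simp: strand_ends_def)
    moreover have "econn {} al g P y = x" using e x y by simp
    moreover have "(y, econn {} al g P y) \<in> rr P" using \<open>y \<in> EE\<close> unfolding strand_rel_def by blast
    ultimately show ?thesis by simp
  qed
qed

lemma rr_rt:
  assumes P: "P \<in> perm_assignments H al {} g" and xy: "(x,y) \<in> (rr P)\<^sup>*" and x: "x \<in> EE"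
  shows "y \<in> EE \<and> (y,x) \<in> (rr P)\<^sup>*"
  using xy
proof (induction rule: rtrancl_induct)
  case base then show ?case using x by simp
next
  case (step y z)
  then show ?case using rr_sym[OF P step.hyps(2)] by (meson converse_rtrancl_into_rtrancl)
qed

end


locale sd = bs H s al g h0 for H :: "'d set" and s al g h0 +
  fixes h :: 'd
  assumes hh: "h = h0 \<or> h = al h0"
begin

abbreviation "x1 \<equiv> s h"
abbreviation "x2 \<equiv> s (s h)"
abbreviation "a \<equiv> g (s h)"
abbreviation "S \<equiv> side H s al h0 h"
abbreviation "lp \<equiv> loop_at s al h"

lemma hH: "h \<in> H" using hh h0H alH by auto
lemma x1H: "x1 \<in> H" using sH hH by auto
lemma x2H: "x2 \<in> H" using sH hH by auto
lemma hal: "{h, al h} = {h0, al h0}" using hh al2 h0H by auto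
lemma gh: "g h = 0" using hh g0 g_al h0H by auto
lemma gah: "g (al h) = 0" using gh g_al hH by auto
lemma al_h_V: "al h \<notin> {h, x1, x2}"
  using hh nl h0_not_V2 al2 h0H by auto
lemma sx2: "s x2 = h" using s3 hH by auto
lemma x1h: "x1 \<noteq> h" using s_ne hH by auto
lemma x2h: "x2 \<noteq> h" using ss_ne hH by auto
lemma x12: "x1 \<noteq> x2" using ss_ne2 hH by metis
lemma hS: "h \<in> S" using side_self hH by auto
lemma x1S: "x1 \<in> S" using side_s hS by auto
lemma x2S: "x2 \<in> S" using side_s x1S by auto
lemma other_side: "side H s al h0 (al h) \<inter> S = {}"
  using hh sides_disjoint al2 h0H by auto
lemma alh_S: "al h \<notin> S"
  using other_side side_self alH hH by auto
lemma h0S: "x \<in> S \<Longrightarrow> x \<in> {h0, al h0} \<Longrightarrow> x = h"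
  using hal alh_S by auto
lemma x1_not0: "x1 \<notin> {h0, al h0}" using x1h h0S x1S by blast
lemma x2_not0: "x2 \<notin> {h0, al h0}" using x2h h0S x2S by blast
lemma ax1S: "al x1 \<in> S" using side_al x1S x1_not0 by auto
lemma ax2S: "al x2 \<in> S" using side_al x2S x2_not0 by auto
lemma ga: "g x2 = a"
proof -
  have "\<bar>int (g h) - int (g x1)\<bar> \<le> int (g x2)" "g x2 \<le> g h + g x1" using adm_at[OF hH] by blast+
  then have "int (g x1) \<le> int (g x2)" "g x2 \<le> g x1" using gh by simp_all
  then show ?thesis by linarith
qed
lemma gax1: "g (al x1) = a" using g_al[OF x1H] .
lemma gax2: "g (al x2) = a" using g_al[OF x2H] ga by simp
lemma lp_iff: "lp \<longleftrightarrow> al x1 = x2" by (simp add: loop_at_def)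
lemma lp_iff2: "lp \<longleftrightarrow> al x2 = x1"
proof -
  have "al x1 = x2 \<longleftrightarrow> al x2 = x1"
  proof
    assume "al x1 = x2" then show "al x2 = x1" using al2[OF x1H] by simp
  next
    assume "al x2 = x1" then show "al x1 = x2" using al2[OF x2H] by simp
  qed
  then show ?thesis using lp_iff by simp
qed
lemma ax1_ne_h: "al x1 \<noteq> h"
proof
  assume "al x1 = h" then have "x1 = al h" using al2[OF x1H] by simp
  then show False using al_h_V by simp
qed
lemma ax2_ne_h: "al x2 \<noteq> h"
proof
  assume "al x2 = h" then have "x2 = al h" using al2[OF x2H] by simp
  then show False using al_h_V by simp
qed
lemma ax1_ne_x1: "al x1 \<noteq> x1" using al_ne[OF x1H] .
lemma ax2_ne_x2: "al x2 \<noteq> x2" using al_ne[OF x2H] .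
lemma ax12: "al x1 \<noteq> al x2"
proof
  assume "al x1 = al x2" then have "x1 = x2" by (rule al_inj)
  then show False using x12 by simp
qed
lemma S_H: "S \<subseteq> H" using side_H by auto

lemma finS: "finite S" using S_H finH finite_subset by auto

lemma SV_s: assumes "u \<in> S" "u \<notin> {h, x1, x2}" shows "s u \<in> S \<and> s u \<notin> {h, x1, x2}"
proof -
  have uH: "u \<in> H" using assms S_H by auto
  have "s u \<noteq> h"
  proof
    assume "s u = h" then have "s (s (s u)) = x2" by simp
    then show False using s3[OF uH] assms by simp
  qed
  moreover have "s u \<noteq> x1" using s_inj assms by blast
  moreover have "s u \<noteq> x2" using s_inj assms by blast
  ultimately show ?thesis using side_s[OF assms(1)] by auto
qed
lemma SV_not0: "u \<in> S \<Longrightarrow> u \<notin> {h, x1, x2} \<Longrightarrow> u \<notin> {h0, al h0}"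
  using h0S by (metis insertCI)
lemma SV_al: "u \<in> S \<Longrightarrow> u \<notin> {h, x1, x2} \<Longrightarrow> al u \<in> S"
  using SV_not0 side_al by blast
lemma SV_al2: "u \<in> S \<Longrightarrow> u \<notin> {h, x1, x2} \<Longrightarrow> u \<notin> {al x1, al x2} \<Longrightarrow> al u \<notin> {h, x1, x2}"
proof -
  assume u: "u \<in> S" "u \<notin> {h, x1, x2}" "u \<notin> {al x1, al x2}"
  have uH: "u \<in> H" using u S_H by auto
  show ?thesis
  proof (intro notI)
    assume "al u \<in> {h, x1, x2}"
    then consider "al u = h" | "al u = x1" | "al u = x2" by auto
    then show False
    proof cases
      case 1 then have "u = al h" using al2 uH by metis
      then show False using u alh_S by auto
    next
      case 2 then have "u = al x1" using al2 uH by metis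
      then show False using u by auto
    next
      case 3 then have "u = al x2" using al2 uH by metis
      then show False using u by auto
    qed
  qed
qed

lemma loop_S: assumes "lp" shows "S = {h, x1, x2}"
proof
  show "{h, x1, x2} \<subseteq> S" using hS x1S x2S by auto
next
  have alx: "al x1 = x2" "al x2 = x1" using assms lp_iff lp_iff2 by auto
  have "y \<in> {h, x1, x2}" if "(h, y) \<in> drm\<^sup>*" for y
    using that
  proof (induction rule: rtrancl_induct)
    case base then show ?case by simp
  next
    case (step y z)
    then consider "z = s y" | "z = al y" "y \<noteq> h0" "y \<noteq> al h0" by (auto simp: dart_rel_minus_def)
    then show ?case
    proof cases
      case 1 then show ?thesis using step.IH sx2 by auto
    next
      case 2
      then have "y \<noteq> h" using hal by auto
      then show ?thesis using step.IH 2 alx by auto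
    qed
  qed
  then show "S \<subseteq> {h, x1, x2}" by (auto simp: side_def)
qed

end


context sd begin

abbreviation "Dp \<equiv> piece_darts H s al h0 h"
abbreviation "alp \<equiv> piece_al s al h"
abbreviation "Cp \<equiv> piece_circles s al h"
abbreviation "ex1 \<equiv> {x1, al x1}"
abbreviation "ex2 \<equiv> {x2, al x2}"
abbreviation "ef \<equiv> {al x1, al x2}"
abbreviation "ES \<equiv> {e \<in> edges H al {}. e \<subseteq> S}"

lemma Dp_nl: "\<not> lp \<Longrightarrow> Dp = S - {h, x1, x2}" by (simp add: piece_darts_def)
lemma Dp_l: "lp \<Longrightarrow> Dp = {}" by (simp add: piece_darts_def)
lemma Cp_nl: "\<not> lp \<Longrightarrow> Cp = {}" by (simp add: piece_circles_def)
lemma Cp_l: "lp \<Longrightarrow> Cp = {x1}" by (simp add: piece_circles_def)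

lemma alp1: "alp (al x1) = al x2" by (simp add: piece_al_def)
lemma alp2: "alp (al x2) = al x1" using ax12 by (simp add: piece_al_def)
lemma alp3: "u \<noteq> al x1 \<Longrightarrow> u \<noteq> al x2 \<Longrightarrow> alp u = al u" by (simp add: piece_al_def)

lemma ax1_D: "\<not> lp \<Longrightarrow> al x1 \<in> Dp"
  using Dp_nl ax1S ax1_ne_h ax1_ne_x1 lp_iff by auto
lemma ax2_D: "\<not> lp \<Longrightarrow> al x2 \<in> Dp"
  using Dp_nl ax2S ax2_ne_h ax2_ne_x2 lp_iff2 by auto

lemma D_S: "Dp \<subseteq> S" by (auto simp: piece_darts_def)
lemma D_H: "Dp \<subseteq> H" using D_S S_H by auto
lemma finD: "finite Dp" using D_H finH finite_subset by auto

lemma D_facts: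
  assumes nl: "\<not> lp" and u: "u \<in> Dp"
  shows "alp u \<in> Dp" "alp (alp u) = u" "alp u \<noteq> u" "g (alp u) = g u" "s u \<in> Dp"
proof -
  have uS: "u \<in> S" "u \<notin> {h, x1, x2}" using u Dp_nl[OF nl] by auto
  have uH: "u \<in> H" using uS S_H by auto
  show "s u \<in> Dp" using SV_s[OF uS] Dp_nl[OF nl] by auto
  consider "u = al x1" | "u = al x2" | "u \<noteq> al x1" "u \<noteq> al x2" by blast
  then have "alp u \<in> Dp \<and> alp (alp u) = u \<and> alp u \<noteq> u \<and> g (alp u) = g u"
  proof cases
    case 1 then show ?thesis using alp1 alp2 ax2_D[OF nl] ax12 gax1 gax2 by auto
  next
    case 2 then show ?thesis using alp1 alp2 ax1_D[OF nl] ax12 gax1 gax2 by auto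
  next
    case 3
    have a1: "alp u = al u" using alp3[OF 3] .
    have n: "al u \<notin> {h, x1, x2}" using SV_al2[OF uS] 3 by auto
    have "al u \<in> Dp" using SV_al[OF uS] n Dp_nl[OF nl] by auto
    moreover have "al u \<noteq> al x1" "al u \<noteq> al x2" using uS(2) al_inj by blast+
    ultimately show ?thesis using a1 al2[OF uH] al_ne[OF uH] g_al[OF uH] alp3 by auto
  qed
  then show "alp u \<in> Dp" "alp (alp u) = u" "alp u \<noteq> u" "g (alp u) = g u" by auto
qed

end


context sd begin

lemma ES_E: "e \<in> ES \<Longrightarrow> \<exists>u. u \<in> S \<and> al u \<in> S \<and> e = {u, al u}"
  by (auto simp: edges_def)

lemma ES_I: "u \<in> S \<Longrightarrow> al u \<in> S \<Longrightarrow> {u, al u} \<in> ES"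
  using edge_in S_H by auto

lemma ex1_ES: "ex1 \<in> ES" using ES_I x1S ax1S by auto
lemma ex2_ES: "ex2 \<in> ES" using ES_I x2S ax2S by auto

lemma ex12_ne: "\<not> lp \<Longrightarrow> ex1 \<noteq> ex2"
  using x12 lp_iff2 by (auto simp: doubleton_eq_iff)

lemma ef_notin: assumes "\<not> lp" shows "ef \<notin> edges H al {}"
proof
  assume "ef \<in> edges H al {}"
  then obtain u where u: "u \<in> H" "ef = {u, al u}" by (auto simp: edges_def)
  from u(2) consider "al x1 = u" "al x2 = al u" | "al x1 = al u" "al x2 = u"
    by (auto simp: doubleton_eq_iff)
  then show False
  proof cases
    case 1 then have "x2 = u" using al_inj by blast
    then show False using 1 assms lp_iff by simp
  next
    case 2 then have "x1 = u" using al_inj by blast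
    then show False using 2 assms lp_iff2 by simp
  qed
qed

lemma edges_piece_nl:
  assumes nl: "\<not> lp"
  shows "edges Dp alp Cp = (ES - {ex1, ex2}) \<union> {ef}"
proof (rule set_eqI)
  fix e
  show "e \<in> edges Dp alp Cp \<longleftrightarrow> e \<in> (ES - {ex1, ex2}) \<union> {ef}"
  proof
    assume "e \<in> edges Dp alp Cp"
    then obtain u where u: "u \<in> Dp" "e = {u, alp u}" using Cp_nl[OF nl] by (auto simp: edges_def)
    have uS: "u \<in> S" "u \<notin> {h, x1, x2}" using u Dp_nl[OF nl] by auto
    consider "u = al x1" | "u = al x2" | "u \<noteq> al x1" "u \<noteq> al x2" by blast
    then show "e \<in> (ES - {ex1, ex2}) \<union> {ef}"
    proof cases
      case 1 then show ?thesis using u alp1 by auto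
    next
      case 2 then show ?thesis using u alp2 by auto
    next
      case 3
      have n: "al u \<notin> {h, x1, x2}" using SV_al2[OF uS] 3 by auto
      have "e \<in> ES" using u alp3[OF 3] ES_I[OF uS(1) SV_al[OF uS]] by simp
      moreover have "x1 \<notin> e" "x2 \<notin> e" using u alp3[OF 3] uS n by auto
      then have "e \<noteq> ex1" "e \<noteq> ex2" by blast+
      ultimately show ?thesis by simp
    qed
  next
    assume "e \<in> (ES - {ex1, ex2}) \<union> {ef}"
    then consider "e = ef" | "e \<in> ES" "e \<noteq> ex1" "e \<noteq> ex2" by blast
    then show "e \<in> edges Dp alp Cp"
    proof cases
      case 1
      have "{al x1, alp (al x1)} \<in> (\<lambda>h. {h, alp h}) ` Dp" using ax1_D[OF nl] by (rule imageI)
      then show ?thesis using 1 alp1 unfolding edges_def by simp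
    next
      case 2
      obtain u where u: "u \<in> S" "al u \<in> S" "e = {u, al u}" using ES_E[OF 2(1)] by blast
      have uH: "u \<in> H" using u S_H by auto
      have "u \<noteq> h" using u alh_S by auto
      moreover have "u \<noteq> x1" "u \<noteq> x2" using u 2 by auto
      moreover have "u \<noteq> al x1" using u 2 al2[OF x1H] by auto
      moreover have "u \<noteq> al x2" using u 2 al2[OF x2H] by auto
      ultimately have "u \<in> Dp" "alp u = al u" using u Dp_nl[OF nl] alp3 by auto
      then have "{u, alp u} \<in> (\<lambda>h. {h, alp h}) ` Dp" by (intro imageI)
      then show ?thesis using u \<open>alp u = al u\<close> unfolding edges_def by simp
    qed
  qed
qed

lemma ES_loop: assumes "lp" shows "ES = {ex1}"
proof
  show "{ex1} \<subseteq> ES" using ex1_ES by auto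
next
  show "ES \<subseteq> {ex1}"
  proof
    fix e assume "e \<in> ES"
    then obtain u where u: "u \<in> S" "al u \<in> S" "e = {u, al u}" using ES_E by blast
    have "u \<noteq> h" using u alh_S by auto
    then have "u = x1 \<or> u = x2" using u(1) loop_S[OF assms] by blast
    moreover have "al x1 = x2" using assms lp_iff by blast
    moreover have "al x2 = x1" using assms lp_iff2 by blast
    ultimately show "e \<in> {ex1}" using u(3) by auto
  qed
qed

lemma edges_piece_l: "lp \<Longrightarrow> edges Dp alp Cp = {{x1}}"
  using Dp_l Cp_l by (simp add: edges_def)

lemma finES: "finite ES" using finH by (simp add: edges_def)

end


context sd begin

abbreviation "AA \<equiv> perm_assignments H al {} g"
abbreviation "Ap \<equiv> perm_assignments Dp alp Cp g"

definition Mf :: "('d set \<Rightarrow> nat \<Rightarrow> nat) \<Rightarrow> nat \<Rightarrow> nat" where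
  "Mf P = tr al x2 a (P ex2) \<circ> rv a \<circ> tr al (al x1) a (P ex1)"
definition pif :: "('d set \<Rightarrow> nat \<Rightarrow> nat) \<Rightarrow> nat \<Rightarrow> nat" where
  "pif P = (if al x1 = erep ef then rv a \<circ> Mf P else rv a \<circ> inv (Mf P))"
definition pil :: "('d set \<Rightarrow> nat \<Rightarrow> nat) \<Rightarrow> nat \<Rightarrow> nat" where
  "pil P = rv a \<circ> tr al x1 a (P ex1)"
definition Phi :: "('d set \<Rightarrow> nat \<Rightarrow> nat) \<Rightarrow> 'd set \<Rightarrow> nat \<Rightarrow> nat" where
  "Phi P = restrict (\<lambda>e. if lp then pil P else if e = ef then pif P else P e) (edges Dp alp Cp)"
definition tau :: "('d set \<Rightarrow> nat \<Rightarrow> nat) \<Rightarrow> nat \<Rightarrow> nat" where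
  "tau P = (if lp then id else P ex1)"
definition TT :: "(nat \<Rightarrow> nat) set" where
  "TT = (if lp then {id} else {\<pi>. \<pi> permutes {..<a}})"

lemma ax1_set: "{al x1, al (al x1)} = ex1" using al2[OF x1H] by auto
lemma ax2_set: "{al x2, al (al x2)} = ex2" using al2[OF x2H] by auto

lemma P_ex:
  assumes "P \<in> AA"
  shows "P ex1 permutes {..<a}" "P ex2 permutes {..<a}"
  using P_edge[OF assms x1H] P_edge[OF assms x2H] ga by auto

lemma P_ES: assumes "P \<in> AA" "e \<in> edges H al {}" shows "P e permutes {..<g (erep e)}"
  using assms by (auto simp: perm_assignments_def PiE_iff)

lemma Mf_perm: assumes "P \<in> AA" shows "Mf P permutes {..<a}"
proof -
  note p = P_ex[OF assms]
  have t1: "tr al (al x1) a (P ex1) permutes {..<a}" using tr_permutes[OF p(1)] .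
  have t2: "tr al x2 a (P ex2) \<circ> rv a permutes {..<a}"
    using permutes_compose[OF rv_permutes tr_permutes[OF p(2)]] .
  show ?thesis unfolding Mf_def using permutes_compose[OF t1 t2] .
qed

lemma pif_perm: assumes "P \<in> AA" shows "pif P permutes {..<a}"
  unfolding pif_def using permutes_compose[OF Mf_perm[OF assms] rv_permutes]
    permutes_compose[OF permutes_inv[OF Mf_perm[OF assms]] rv_permutes] by simp

lemma pil_perm: assumes "P \<in> AA" shows "pil P permutes {..<a}"
  unfolding pil_def using permutes_compose[OF tr_permutes[OF P_ex(1)[OF assms]] rv_permutes] .

lemma tr_pif: assumes "P \<in> AA" shows "tr alp (al x1) a (pif P) = Mf P"
proof -
  have M: "Mf P permutes {..<a}" using Mf_perm[OF assms] .
  show ?thesis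
  proof (cases "al x1 = erep ef")
    case True
    then show ?thesis by (simp add: tr_def pif_def alp1 o_assoc rv_o_rv)
  next
    case False
    have "inv (rv a \<circ> inv (Mf P)) = inv (inv (Mf P)) \<circ> inv (rv a)"
      using inv_comp_perm[OF rv_permutes permutes_inv[OF M]] .
    then have "inv (rv a \<circ> inv (Mf P)) \<circ> rv a = Mf P"
      by (simp add: permutes_inv_inv[OF M] inv_rv comp_assoc rv_o_rv)
    then show ?thesis using False by (simp add: tr_def pif_def alp1)
  qed
qed

lemma sign_Mf: assumes "P \<in> AA" shows "sign (Mf P) = sign (rv a) * sign (P ex1) * sign (P ex2)"
proof -
  note p = P_ex[OF assms]
  have q: "permutation (tr al x2 a (P ex2))" "permutation (rv a)" "permutation (tr al (al x1) a (P ex1))"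
    by (rule perm_of[OF tr_permutes[OF p(2)]], rule perm_of[OF rv_permutes], rule perm_of[OF tr_permutes[OF p(1)]])
  have q2: "permutation (tr al x2 a (P ex2) \<circ> rv a)" using q permutation_compose by blast
  have "sign (Mf P) = sign (tr al x2 a (P ex2)) * sign (rv a) * sign (tr al (al x1) a (P ex1))"
    unfolding Mf_def using sign_compose[OF q2 q(3)] sign_compose[OF q(1,2)] by simp
  also have "\<dots> = sign (rv a) * sign (P ex1) * sign (P ex2)"
    using sign_tr[OF p(1), of al "al x1"] sign_tr[OF p(2), of al x2]
    by (simp add: ac_simps)
  finally show ?thesis .
qed

lemma sign_pif: assumes "P \<in> AA" shows "sign (pif P) = sign (P ex1) * sign (P ex2)"
proof -
  have M: "permutation (Mf P)" "permutation (rv a)" "permutation (inv (Mf P))"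
    using perm_of[OF Mf_perm[OF assms]] perm_of[OF rv_permutes] perm_of[OF permutes_inv[OF Mf_perm[OF assms]]] by blast+
  have "sign (pif P) = sign (rv a) * sign (Mf P)"
    unfolding pif_def using sign_compose[OF M(2) M(1)] sign_compose[OF M(2) M(3)] sign_inverse[OF M(1)]
    by simp
  then show ?thesis using sign_Mf[OF assms] by (simp add: ac_simps)
qed

lemma sign_pil: assumes "P \<in> AA" shows "sign (pil P) = sign (P ex1)"
proof -
  note p = P_ex[OF assms]
  have q: "permutation (rv a)" "permutation (tr al x1 a (P ex1))"
    by (rule perm_of[OF rv_permutes], rule perm_of[OF tr_permutes[OF p(1)]])
  show ?thesis unfolding pil_def using sign_compose[OF q] sign_tr[OF p(1), of al x1] by (simp add: ac_simps)
qed

end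


lemma card_perm_assign:
  assumes "finite (edges H al C)"
  shows "card (perm_assignments H al C g) = (\<Prod>e\<in>edges H al C. fact (g (erep e)))"
  unfolding perm_assignments_def card_PiE[OF assms]
  by (rule prod.cong) (auto intro: card_permutations)

lemma prod_two:
  assumes "finite A" "x \<in> A" "y \<in> A" "x \<noteq> y"
  shows "prod f A = f x * (f y * prod f (A - {x, y}))"
proof -
  have "prod f A = f x * prod f (A - {x})" using prod.remove[OF assms(1,2)] .
  moreover have "prod f (A - {x}) = f y * prod f (A - {x} - {y})"
    using prod.remove[of "A - {x}" y f] assms by auto
  moreover have "A - {x} - {y} = A - {x, y}" by auto
  ultimately show ?thesis by simp
qed

context sd begin

lemma erep_ex1: "g (erep ex1) = a" using erep_in[of x1 "al x1"] gax1 by auto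
lemma erep_ex2: "g (erep ex2) = a" using erep_in[of x2 "al x2"] gax2 ga by auto
lemma erep_ef: "g (erep ef) = a" using erep_in[of "al x1" "al x2"] gax1 gax2 by auto
lemma erep_x1: "erep {x1} = x1" using erep_in[of x1 x1] by simp

lemma Phi_in: assumes P: "P \<in> AA" shows "Phi P \<in> Ap"
proof (cases lp)
  case True
  then show ?thesis unfolding Phi_def perm_assignments_def restrict_PiE_iff
    using edges_piece_l pil_perm[OF P] erep_x1 by simp
next
  case False
  have "P e permutes {..<g (erep e)}" if "e \<in> ES - {ex1, ex2}" for e
    using P_ES[OF P] that by blast
  then show ?thesis unfolding Phi_def perm_assignments_def restrict_PiE_iff
    using False edges_piece_nl pif_perm[OF P] erep_ef by auto
qed

lemma tau_in: assumes P: "P \<in> AA" shows "tau P \<in> TT"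
  using P_ex[OF P] by (simp add: tau_def TT_def)

lemma ES_nl_split:
  assumes "\<not> lp"
  shows "ES = insert ex1 (insert ex2 (ES - {ex1, ex2}))" "ex1 \<notin> insert ex2 (ES - {ex1, ex2})"
    "ex2 \<notin> ES - {ex1, ex2}"
  using ex1_ES ex2_ES ex12_ne[OF assms] by auto

lemma ef_notin2: "\<not> lp \<Longrightarrow> ef \<notin> ES - {ex1, ex2}" using ef_notin by auto

lemma finESr: "finite (ES - {ex1, ex2})" using finES by auto

lemma Phi_other: "\<not> lp \<Longrightarrow> e \<in> ES - {ex1, ex2} \<Longrightarrow> Phi P e = P e"
  unfolding Phi_def using edges_piece_nl ef_notin2 by auto

lemma Phi_ef: "\<not> lp \<Longrightarrow> Phi P ef = pif P"
  unfolding Phi_def using edges_piece_nl by auto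

lemma Phi_l: "lp \<Longrightarrow> Phi P {x1} = pil P"
  unfolding Phi_def using edges_piece_l by auto

lemma sign_side:
  assumes P: "P \<in> AA"
  shows "(\<Prod>e\<in>ES. real_of_int (sign (P e))) = (\<Prod>e\<in>edges Dp alp Cp. real_of_int (sign (Phi P e)))"
proof (cases lp)
  case True
  then show ?thesis using ES_loop edges_piece_l Phi_l sign_pil[OF P] by simp
next
  case False
  note sp = ES_nl_split[OF False]
  have "(\<Prod>e\<in>ES. real_of_int (sign (P e))) =
     real_of_int (sign (P ex1)) * (real_of_int (sign (P ex2)) * (\<Prod>e\<in>ES - {ex1, ex2}. real_of_int (sign (P e))))"
    by (subst prod_two[OF finES ex1_ES ex2_ES ex12_ne[OF False]]) (rule refl)
  also have "\<dots> = real_of_int (sign (Phi P ef)) * (\<Prod>e\<in>ES - {ex1, ex2}. real_of_int (sign (Phi P e)))"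
  proof -
    have "(\<Prod>e\<in>ES - {ex1, ex2}. real_of_int (sign (Phi P e))) = (\<Prod>e\<in>ES - {ex1, ex2}. real_of_int (sign (P e)))"
      by (rule prod.cong) (simp_all only: Phi_other[OF False])
    moreover have "real_of_int (sign (Phi P ef)) = real_of_int (sign (P ex1)) * real_of_int (sign (P ex2))"
      using sign_pif[OF P] Phi_ef[OF False, of P] by simp
    ultimately show ?thesis by simp
  qed
  also have "\<dots> = (\<Prod>e\<in>insert ef (ES - {ex1, ex2}). real_of_int (sign (Phi P e)))"
    by (rule prod.insert[OF finESr ef_notin2[OF False], symmetric])
  also have "insert ef (ES - {ex1, ex2}) = edges Dp alp Cp" using edges_piece_nl[OF False] by simp
  finally show ?thesis .
qed

lemma card_side:
  "(\<Prod>e\<in>ES. fact (g (erep e)) :: nat) = card Ap * card TT"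
proof (cases lp)
  case True
  have "finite (edges Dp alp Cp)" using edges_piece_l[OF True] by simp
  then have "card Ap = (\<Prod>e\<in>{{x1}}. fact (g (erep e)))"
    using card_perm_assign edges_piece_l[OF True] by metis
  then have "card Ap = fact a" using erep_x1 by simp
  then show ?thesis using True ES_loop[OF True] erep_ex1 by (simp add: TT_def)
next
  case False
  note sp = ES_nl_split[OF False]
  have fe: "finite (edges Dp alp Cp)" using edges_piece_nl[OF False] finESr by simp
  have "(\<Prod>e\<in>ES. fact (g (erep e)) :: nat) =
     fact a * (fact a * (\<Prod>e\<in>ES - {ex1, ex2}. fact (g (erep e))))"
    by (subst prod_two[OF finES ex1_ES ex2_ES ex12_ne[OF False]]) (simp only: erep_ex1 erep_ex2)
  also have "\<dots> = card Ap * fact a"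
  proof -
    have e: "edges Dp alp Cp = insert ef (ES - {ex1, ex2})" using edges_piece_nl[OF False] by simp
    have "card Ap = (\<Prod>e\<in>insert ef (ES - {ex1, ex2}). fact (g (erep e)))"
      using card_perm_assign[OF fe] unfolding e .
    also have "\<dots> = fact a * (\<Prod>e\<in>ES - {ex1, ex2}. fact (g (erep e)))"
      by (subst prod.insert[OF finESr ef_notin2[OF False]]) (simp only: erep_ef)
    finally show ?thesis by simp
  qed
  also have "card TT = fact a" using False card_permutations[of "{..<a}" a] by (simp add: TT_def)
  ultimately show ?thesis by simp
qed

lemma Mf_cancel:
  assumes "P \<in> AA" "Q \<in> AA" "pif P = pif Q"
  shows "Mf P = Mf Q"
proof (cases "al x1 = erep ef")
  case True
  then have "rv a \<circ> (rv a \<circ> Mf P) = rv a \<circ> (rv a \<circ> Mf Q)" using assms(3) by (simp add: pif_def)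
  then show ?thesis by (simp add: o_assoc rv_o_rv)
next
  case False
  then have "rv a \<circ> (rv a \<circ> inv (Mf P)) = rv a \<circ> (rv a \<circ> inv (Mf Q))" using assms(3) by (simp add: pif_def)
  then have "inv (Mf P) = inv (Mf Q)" by (simp add: o_assoc rv_o_rv)
  then have "inv (inv (Mf P)) = inv (inv (Mf Q))" by simp
  then show ?thesis using permutes_inv_inv[OF Mf_perm[OF assms(1)]] permutes_inv_inv[OF Mf_perm[OF assms(2)]] by simp
qed

lemma inj_side:
  assumes P: "P \<in> AA" and Q: "Q \<in> AA" and ph: "Phi P = Phi Q" and ta: "tau P = tau Q"
    and e: "e \<in> ES"
  shows "P e = Q e"
proof (cases lp)
  case True
  have "pil P = pil Q" using ph Phi_l[OF True, of P] Phi_l[OF True, of Q] by simp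
  then have "rv a \<circ> (rv a \<circ> tr al x1 a (P ex1)) = rv a \<circ> (rv a \<circ> tr al x1 a (Q ex1))"
    by (simp add: pil_def)
  then have "tr al x1 a (P ex1) = tr al x1 a (Q ex1)" by (simp add: o_assoc rv_o_rv)
  then have "P ex1 = Q ex1" by (rule tr_inj[OF P_ex(1)[OF P] P_ex(1)[OF Q]])
  then show ?thesis using e ES_loop[OF True] by simp
next
  case False
  have e1: "P ex1 = Q ex1" using ta False by (simp add: tau_def)
  have "pif P = pif Q" using ph Phi_ef[OF False, of P] Phi_ef[OF False, of Q] by simp
  then have M: "Mf P = Mf Q" by (rule Mf_cancel[OF P Q])
  let ?B = "tr al (al x1) a (P ex1)"
  have B: "?B permutes {..<a}" using tr_permutes[OF P_ex(1)[OF P]] .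
  have "tr al x2 a (P ex2) \<circ> rv a \<circ> ?B = tr al x2 a (Q ex2) \<circ> rv a \<circ> ?B"
    using M e1 by (simp add: Mf_def)
  then have "tr al x2 a (P ex2) \<circ> rv a \<circ> (?B \<circ> inv ?B) = tr al x2 a (Q ex2) \<circ> rv a \<circ> (?B \<circ> inv ?B)"
    by (simp add: o_assoc)
  then have "tr al x2 a (P ex2) \<circ> rv a \<circ> rv a = tr al x2 a (Q ex2) \<circ> rv a \<circ> rv a"
    using permutes_inv_o(1)[OF B] by simp
  then have "tr al x2 a (P ex2) = tr al x2 a (Q ex2)" by (simp add: comp_assoc rv_o_rv)
  then have e2: "P ex2 = Q ex2" by (rule tr_inj[OF P_ex(2)[OF P] P_ex(2)[OF Q]])
  show ?thesis
  proof (cases "e \<in> {ex1, ex2}")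
    case True then show ?thesis using e1 e2 by auto
  next
    case False
    then have "e \<in> ES - {ex1, ex2}" using e by blast
    then have "Phi P e = P e" "Phi Q e = Q e" using Phi_other[OF \<open>\<not> lp\<close>] by blast+
    then show ?thesis using ph by simp
  qed
qed

end


lemma perm_back:
  fixes p :: "nat \<Rightarrow> nat"
  assumes p: "p permutes {..<n}" and st: "\<And>w. w < n \<Longrightarrow> ((c, w), (c, p w)) \<in> R" and z: "z < n"
  shows "((c, p z), (c, z)) \<in> R\<^sup>*"
proof -
  have pp: "permutation p" using perm_of[OF p] .
  obtain m where m: "m > 0" "(p ^^ m) z = z" using permutation_self[OF pp] by blast
  have lt: "(p ^^ k) w < n" if "w < n" for k w
    using permutes_in_funpow_image[OF p, of w k] that by simp
  have pz: "p z < n" using p z permutes_in_image by (metis lessThan_iff)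
  have "((c, p z), (c, (p ^^ k) (p z))) \<in> R\<^sup>*" for k
  proof (induction k)
    case 0 then show ?case by simp
  next
    case (Suc k)
    have "((c, (p ^^ k) (p z)), (c, p ((p ^^ k) (p z)))) \<in> R" using st lt[OF pz] by blast
    then show ?case using Suc by (simp add: rtrancl_into_rtrancl)
  qed
  from this[of "m - 1"] have "((c, p z), (c, (p ^^ (m - 1)) (p z))) \<in> R\<^sup>*" .
  moreover have "(p ^^ (m - 1)) (p z) = (p ^^ m) z"
    using m(1) by (metis Suc_diff_1 funpow_Suc_right o_apply)
  ultimately show ?thesis using m(2) by simp
qed

context sd begin

lemma vconn_x1: "i < a \<Longrightarrow> vconn H s g (x1, i) = (x2, rv a i)"
  using x1H ga gh s3[OF hH] by (simp add: vconn_def Let_def rv_def)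

lemma vconn_x2: "i < a \<Longrightarrow> vconn H s g (x2, i) = (x1, rv a i)"
  using x2H ga gh s3[OF x1H] sx2 by (simp add: vconn_def Let_def rv_def)

lemma tr_ax1_x1:
  assumes P: "P \<in> AA" and i: "i < a"
  shows "tr al (al x1) a (P ex1) (tr al x1 a (P ex1) i) = i"
proof -
  have "tr al (al x1) a (P ex1) = inv (tr al x1 a (P ex1))"
    using tr_al[of al x1 "P ex1" a] al2[OF x1H] ax1_ne_x1 P_ex(1)[OF P] by simp
  then show ?thesis using permutes_inverses(2)[OF tr_permutes[OF P_ex(1)[OF P]]] by simp
qed

lemma econn_x1:
  assumes P: "P \<in> AA" and i: "i < a"
  shows "econn {} al g P (x1, i) = (al x1, tr al x1 a (P ex1) i)"
  using econn_G(1)[OF P x1H] i by simp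

lemma econn_x2:
  assumes P: "P \<in> AA" and i: "i < a"
  shows "econn {} al g P (x2, i) = (al x2, tr al x2 a (P ex2) i)"
  using econn_G(1)[OF P x2H] i ga by simp

lemma econn_ax1:
  assumes P: "P \<in> AA" and i: "i < a"
  shows "econn {} al g P (al x1, i) = (x1, tr al (al x1) a (P ex1) i)"
  using econn_G(1)[OF P alH[OF x1H]] i gax1 al2[OF x1H] ax1_set by simp

lemma econn_ax2:
  assumes P: "P \<in> AA" and i: "i < a"
  shows "econn {} al g P (al x2, i) = (x2, tr al (al x2) a (P ex2) i)"
  using econn_G(1)[OF P alH[OF x2H]] i gax2 al2[OF x2H] ax2_set by simp

end


lemma P_edge_gen:
  assumes "Q \<in> perm_assignments D al' C g'" "u \<in> D" "g' (al' u) = g' u"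
  shows "Q {u, al' u} permutes {..<g' u}"
proof -
  have "{u, al' u} \<in> edges D al' C" using assms(2) by (auto simp: edges_def)
  then have "Q {u, al' u} permutes {..<g' (erep {u, al' u})}"
    using assms(1) by (auto simp: perm_assignments_def PiE_iff)
  moreover have "g' (erep {u, al' u}) = g' u" using erep_in[of u "al' u"] assms(3) by auto
  ultimately show ?thesis by simp
qed

lemma tr_cong: "al u = al' u \<Longrightarrow> tr al u n \<pi> = tr al' u n \<pi>"
  by (simp add: tr_def)

context sd begin

abbreviation "ESs \<equiv> {x \<in> EE. fst x \<in> S}"
abbreviation "Ep \<equiv> strand_ends Dp Cp g"
abbreviation "rp Q \<equiv> strand_rel Dp s alp Cp g Q"

definition ff :: "('d set \<Rightarrow> nat \<Rightarrow> nat) \<Rightarrow> 'd \<times> nat \<Rightarrow> 'd \<times> nat" where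
  "ff P x = (if lp then (if fst x = x2 then (x1, rv a (snd x)) else x)
            else (if fst x = x1 \<or> fst x = x2 then econn {} al g P x else x))"

lemma Mf_app: "Mf P j = tr al x2 a (P ex2) (rv a (tr al (al x1) a (P ex1) j))"
  by (simp add: Mf_def)

lemma edge_other:
  assumes nl: "\<not> lp" and u: "u \<in> Dp" "u \<noteq> al x1" "u \<noteq> al x2"
  shows "{u, al u} \<in> ES - {ex1, ex2}"
proof -
  have uS: "u \<in> S" "u \<notin> {h, x1, x2}" using u Dp_nl[OF nl] by auto
  have n: "al u \<notin> {h, x1, x2}" using SV_al2[OF uS] u by auto
  have "{u, al u} \<in> ES" using ES_I[OF uS(1) SV_al[OF uS]] .
  moreover have "x1 \<notin> {u, al u}" "x2 \<notin> {u, al u}" using uS n by auto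
  ultimately show ?thesis by blast
qed

lemma econn_p_other:
  assumes P: "P \<in> AA" and nl: "\<not> lp" and u: "u \<in> Dp" "u \<noteq> al x1" "u \<noteq> al x2" and i: "i < g u"
  shows "econn Cp alp g (Phi P) (u, i) = econn {} al g P (u, i)"
proof -
  have uH: "u \<in> H" using u D_H by auto
  have a1: "alp u = al u" using alp3 u by auto
  have perm: "Phi P {u, alp u} permutes {..<g u}"
    using P_edge_gen[OF Phi_in[OF P] u(1) D_facts(4)[OF nl u(1)]] .
  have ph: "Phi P {u, al u} = P {u, al u}" using Phi_other[OF nl edge_other[OF nl u]] .
  have "econn Cp alp g (Phi P) (u, i) = (alp u, tr alp u (g u) (Phi P {u, alp u}) i)"
    using econn_tr[of u Cp i g "Phi P" alp] perm i Cp_nl[OF nl] by simp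
  also have "\<dots> = (al u, tr al u (g u) (P {u, al u}) i)"
    using a1 ph tr_cong[of alp u al] by simp
  also have "\<dots> = econn {} al g P (u, i)" using econn_G(1)[OF P uH i] by simp
  finally show ?thesis .
qed

lemma econn_p_ax1:
  assumes P: "P \<in> AA" and nl: "\<not> lp" and j: "j < a"
  shows "econn Cp alp g (Phi P) (al x1, j) = (al x2, Mf P j)"
proof -
  have perm: "Phi P {al x1, alp (al x1)} permutes {..<g (al x1)}"
    using P_edge_gen[OF Phi_in[OF P] ax1_D[OF nl] D_facts(4)[OF nl ax1_D[OF nl]]] .
  have "econn Cp alp g (Phi P) (al x1, j) = (alp (al x1), tr alp (al x1) (g (al x1)) (Phi P {al x1, alp (al x1)}) j)"
    using econn_tr[of "al x1" Cp j g "Phi P" alp] perm j Cp_nl[OF nl] gax1 by simp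
  also have "\<dots> = (al x2, Mf P j)"
    using alp1 gax1 Phi_ef[OF nl, of P] tr_pif[OF P] by simp
  finally show ?thesis .
qed

lemma econn_p_ax2:
  assumes P: "P \<in> AA" and nl: "\<not> lp" and j: "j < a"
  shows "econn Cp alp g (Phi P) (al x2, j) = (al x1, inv (Mf P) j)"
proof -
  have perm: "Phi P {al x2, alp (al x2)} permutes {..<g (al x2)}"
    using P_edge_gen[OF Phi_in[OF P] ax2_D[OF nl] D_facts(4)[OF nl ax2_D[OF nl]]] .
  have e: "{al x2, alp (al x2)} = ef" using alp2 by auto
  have "econn Cp alp g (Phi P) (al x2, j) = (alp (al x2), tr alp (al x2) (g (al x2)) (Phi P {al x2, alp (al x2)}) j)"
    using econn_tr[of "al x2" Cp j g "Phi P" alp] perm j Cp_nl[OF nl] gax2 by simp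
  also have "\<dots> = (al x1, tr alp (alp (al x1)) a (pif P) j)"
    using alp2 alp1 gax2 e Phi_ef[OF nl, of P] by simp
  also have "tr alp (alp (al x1)) a (pif P) = inv (tr alp (al x1) a (pif P))"
    using tr_al[of alp "al x1" "pif P" a] alp1 alp2 ax12 pif_perm[OF P] by simp
  also have "\<dots> = inv (Mf P)" using tr_pif[OF P] by simp
  finally show ?thesis .
qed

lemma econn_p_l:
  assumes "lp" shows "econn Cp alp g Q (x1, i) = (x1, Q {x1} i)"
  using Cp_l[OF assms] by (simp add: econn_def)

lemma vconn_p: "u \<in> Dp \<Longrightarrow> vconn Dp s g (u, i) = vconn H s g (u, i)"
  using D_H by (auto simp: vconn_def)

lemma vconn_p_l: "lp \<Longrightarrow> vconn Dp s g x = x"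
  using Dp_l by (auto simp: vconn_def split: prod.splits)

end


context sd begin

lemma EE_iff: "x \<in> EE \<longleftrightarrow> fst x \<in> H \<and> snd x < g (fst x)"
  by (cases x) (simp add: strand_ends_def)
lemma Ep_iff: "x \<in> Ep \<longleftrightarrow> fst x \<in> Dp \<union> Cp \<and> snd x < g (fst x)"
  by (cases x) (simp add: strand_ends_def)

lemma rr_v: "x \<in> EE \<Longrightarrow> (x, vconn H s g x) \<in> rr P" unfolding strand_rel_def by blast
lemma rr_e: "x \<in> EE \<Longrightarrow> (x, econn {} al g P x) \<in> rr P" unfolding strand_rel_def by blast
lemma rp_v: "x \<in> Ep \<Longrightarrow> (x, vconn Dp s g x) \<in> rp Q" unfolding strand_rel_def by blast
lemma rp_e: "x \<in> Ep \<Longrightarrow> (x, econn Cp alp g Q x) \<in> rp Q" unfolding strand_rel_def by blast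

lemma tr_x1_ax1:
  assumes P: "P \<in> AA" and i: "i < a"
  shows "tr al x1 a (P ex1) (tr al (al x1) a (P ex1) i) = i"
proof -
  have "tr al (al x1) a (P ex1) = inv (tr al x1 a (P ex1))"
    using tr_al[of al x1 "P ex1" a] al2[OF x1H] ax1_ne_x1 P_ex(1)[OF P] by simp
  then show ?thesis using permutes_inverses(1)[OF tr_permutes[OF P_ex(1)[OF P]]] by simp
qed

lemma tr_x2_ax2:
  assumes P: "P \<in> AA" and i: "i < a"
  shows "tr al x2 a (P ex2) (tr al (al x2) a (P ex2) i) = i"
proof -
  have "tr al (al x2) a (P ex2) = inv (tr al x2 a (P ex2))"
    using tr_al[of al x2 "P ex2" a] al2[OF x2H] ax2_ne_x2 P_ex(2)[OF P] by simp
  then show ?thesis using permutes_inverses(1)[OF tr_permutes[OF P_ex(2)[OF P]]] by simp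
qed

lemma tr_lt1: "P \<in> AA \<Longrightarrow> i < a \<Longrightarrow> tr al' u a (P ex1) i < a"
  by (rule tr_lt[OF P_ex(1)])
lemma tr_lt2: "P \<in> AA \<Longrightarrow> i < a \<Longrightarrow> tr al' u a (P ex2) i < a"
  by (rule tr_lt[OF P_ex(2)])
lemma rv_lt2: "i < a \<Longrightarrow> rv a i < a" by (simp add: rv_def)

lemma path_ax1:
  assumes P: "P \<in> AA" and j: "j < a"
  shows "((al x1, j), (al x2, Mf P j)) \<in> (rr P)\<^sup>*"
proof -
  let ?k = "tr al (al x1) a (P ex1) j"
  have k: "?k < a" using tr_lt1[OF P j] .
  have s1: "((al x1, j), (x1, ?k)) \<in> rr P"
    using rr_e[of "(al x1, j)" P] econn_ax1[OF P j] alH[OF x1H] gax1 j by (simp add: EE_iff)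
  have s2: "((x1, ?k), (x2, rv a ?k)) \<in> rr P"
    using rr_v[of "(x1, ?k)" P] vconn_x1[OF k] x1H k by (simp add: EE_iff)
  have s3: "((x2, rv a ?k), (al x2, Mf P j)) \<in> rr P"
    using rr_e[of "(x2, rv a ?k)" P] econn_x2[OF P rv_lt2[OF k]] x2H ga rv_lt2[OF k]
    by (simp add: EE_iff Mf_app)
  show ?thesis using s1 s2 s3 by (meson converse_rtrancl_into_rtrancl r_into_rtrancl)
qed

lemma rp_sub:
  assumes P: "P \<in> AA" and xy: "(x,y) \<in> rp (Phi P)"
  shows "(x,y) \<in> (rr P)\<^sup>*"
proof -
  have x: "x \<in> Ep" and y: "y = vconn Dp s g x \<or> y = econn Cp alp g (Phi P) x"
    using xy by (auto simp: strand_rel_def)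
  obtain u i where ui: "x = (u,i)" by (cases x)
  show ?thesis
  proof (cases lp)
    case True
    have "fst x \<in> Dp \<union> Cp" "snd x < g (fst x)" using x Ep_iff by blast+
    then have u: "u = x1" "i < a" using ui Dp_l[OF True] Cp_l[OF True] by auto
    from y show ?thesis
    proof
      assume "y = vconn Dp s g x" then show ?thesis using vconn_p_l[OF True] by simp
    next
      assume "y = econn Cp alp g (Phi P) x"
      then have y: "y = (x1, pil P i)" using econn_p_l[OF True] Phi_l[OF True] ui u by simp
      let ?t = "tr al x1 a (P ex1) i"
      have t: "?t < a" using tr_lt1[OF P u(2)] .
      have s1: "((x1, i), (x2, ?t)) \<in> rr P"
        using rr_e[of "(x1, i)" P] econn_x1[OF P u(2)] x1H u(2) True lp_iff by (simp add: EE_iff)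
      have s2: "((x2, ?t), (x1, rv a ?t)) \<in> rr P"
        using rr_v[of "(x2, ?t)" P] vconn_x2[OF t] x2H ga t by (simp add: EE_iff)
      have "((x1, i), (x1, rv a ?t)) \<in> (rr P)\<^sup>*" using s1 s2 by (meson converse_rtrancl_into_rtrancl r_into_rtrancl)
      then show ?thesis using y ui u by (simp add: pil_def)
    qed
  next
    case False
    have "fst x \<in> Dp \<union> Cp" "snd x < g (fst x)" using x Ep_iff by blast+
    then have u: "u \<in> Dp" "i < g u" using ui Cp_nl[OF False] by auto
    have uH: "u \<in> H" using u D_H by auto
    have xE: "x \<in> EE" using ui u uH by (simp add: EE_iff)
    from y show ?thesis
    proof
      assume "y = vconn Dp s g x"
      then show ?thesis using vconn_p[OF u(1)] rr_v[OF xE] ui by auto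
    next
      assume ye: "y = econn Cp alp g (Phi P) x"
      consider "u = al x1" | "u = al x2" | "u \<noteq> al x1" "u \<noteq> al x2" by blast
      then show ?thesis
      proof cases
        case 1
        then have "i < a" using u gax1 by simp
        then show ?thesis using ye ui 1 econn_p_ax1[OF P False] path_ax1[OF P] by simp
      next
        case 2
        then have i: "i < a" using u gax2 by simp
        let ?w = "inv (Mf P) i"
        have w: "?w < a" using permutes_in_image[OF permutes_inv[OF Mf_perm[OF P]], of i] i by simp
        have Mw: "Mf P ?w = i" using permutes_inverses(1)[OF Mf_perm[OF P]] by simp
        have "((al x1, ?w), (al x2, i)) \<in> (rr P)\<^sup>*" using path_ax1[OF P w] Mw by simp
        moreover have "(al x1, ?w) \<in> EE" using alH[OF x1H] gax1 w by (simp add: EE_iff)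
        ultimately have "((al x2, i), (al x1, ?w)) \<in> (rr P)\<^sup>*" using rr_rt[OF P] by blast
        then show ?thesis using ye ui 2 econn_p_ax2[OF P False i] by simp
      next
        case 3
        have "y = econn {} al g P x" using ye ui econn_p_other[OF P False u(1) 3 u(2)] by simp
        then show ?thesis using rr_e[OF xE] by blast
      qed
    qed
  qed
qed

end


context sd begin

lemma ESs_cases:
  assumes x: "x \<in> ESs"
  obtains u i where "x = (u,i)" "u \<in> S" "u \<in> H" "i < g u" "u \<noteq> h"
proof -
  obtain u i where ui: "x = (u,i)" by (cases x)
  have "u \<in> S" "u \<in> H" "i < g u" using x ui by (auto simp: strand_ends_def)
  moreover have "u \<noteq> h" using \<open>i < g u\<close> gh by auto
  ultimately show ?thesis using that ui by blast
qed

lemma ff_conn: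
  assumes P: "P \<in> AA" and x: "x \<in> ESs"
  shows "(x, ff P x) \<in> (rr P)\<^sup>* \<and> (ff P x, x) \<in> (rr P)\<^sup>*"
proof -
  obtain u i where ui: "x = (u,i)" "u \<in> S" "u \<in> H" "i < g u" "u \<noteq> h" using ESs_cases[OF x] by blast
  have xE: "x \<in> EE" using x by simp
  show ?thesis
  proof (cases lp)
    case True
    show ?thesis
    proof (cases "u = x2")
      case True2: True
      have "ff P x = vconn H s g x" using True True2 ui vconn_x2[of i] ga by (simp add: ff_def)
      then show ?thesis using rr_v[OF xE] rr_sym[OF P rr_v[OF xE]] by auto
    next
      case False
      then show ?thesis using True ui by (simp add: ff_def)
    qed
  next
    case False
    show ?thesis
    proof (cases "u = x1 \<or> u = x2")
      case True
      then have "ff P x = econn {} al g P x" using False ui by (simp add: ff_def)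
      then show ?thesis using rr_e[OF xE] rr_sym[OF P rr_e[OF xE]] by auto
    next
      case F2: False
      then show ?thesis using False ui by (simp add: ff_def)
    qed
  qed
qed

lemma ff_img_sub:
  assumes P: "P \<in> AA" and x: "x \<in> ESs"
  shows "ff P x \<in> Ep"
proof -
  obtain u i where ui: "x = (u,i)" "u \<in> S" "u \<in> H" "i < g u" "u \<noteq> h" using ESs_cases[OF x] by blast
  show ?thesis
  proof (cases lp)
    case True
    then have u: "u = x1 \<or> u = x2" using ui loop_S by auto
    have i: "i < a" using u ui ga by auto
    from u show ?thesis
    proof
      assume u1: "u = x1"
      then have "ff P x = (x1, i)" using True ui x12 by (simp add: ff_def)
      then show ?thesis using Cp_l[OF True] i by (simp add: strand_ends_def)
    next
      assume u2: "u = x2"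
      then have "ff P x = (x1, rv a i)" using True ui by (simp add: ff_def)
      then show ?thesis using Cp_l[OF True] rv_lt2[OF i] by (simp add: strand_ends_def)
    qed
  next
    case False
    show ?thesis
    proof (cases "u = x1 \<or> u = x2")
      case True
      then have i: "i < a" using ui ga by auto
      from True show ?thesis
      proof
        assume u: "u = x1"
        have "ff P x = (al x1, tr al x1 a (P ex1) i)" using False u ui econn_x1[OF P i] by (simp add: ff_def)
        then show ?thesis using ax1_D[OF False] gax1 tr_lt1[OF P i] by (simp add: strand_ends_def)
      next
        assume u: "u = x2"
        have "ff P x = (al x2, tr al x2 a (P ex2) i)" using False u ui econn_x2[OF P i] x12 by (simp add: ff_def)
        then show ?thesis using ax2_D[OF False] gax2 tr_lt2[OF P i] by (simp add: strand_ends_def)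
      qed
    next
      case F2: False
      then have "u \<in> Dp" using ui Dp_nl[OF False] by auto
      then show ?thesis using False F2 ui by (simp add: ff_def strand_ends_def)
    qed
  qed
qed

lemma Ep_ESs: "x \<in> Ep \<Longrightarrow> x \<in> ESs \<and> ff P x = x"
proof -
  assume x: "x \<in> Ep"
  obtain u i where ui: "x = (u,i)" by (cases x)
  have u: "u \<in> Dp \<union> Cp" "i < g u" using x ui by (auto simp: strand_ends_def)
  show "x \<in> ESs \<and> ff P x = x"
  proof (cases lp)
    case True
    then have "u = x1" using u Dp_l Cp_l by auto
    then have "ff P x = x" using True ui x12 by (simp add: ff_def)
    moreover have "x \<in> ESs" using \<open>u = x1\<close> ui u(2) x1S x1H by (simp add: strand_ends_def)
    ultimately show ?thesis by simp
  next
    case False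
    then have "u \<in> Dp" using u Cp_nl by auto
    then have "u \<in> S" "u \<noteq> x1" "u \<noteq> x2" using Dp_nl[OF False] by auto
    then have "ff P x = x" using False ui by (simp add: ff_def)
    moreover have "x \<in> ESs" using \<open>u \<in> S\<close> ui u(2) S_H by (auto simp: strand_ends_def)
    ultimately show ?thesis by simp
  qed
qed

lemma ff_img:
  assumes P: "P \<in> AA" shows "ff P ` ESs = Ep"
proof
  show "ff P ` ESs \<subseteq> Ep" using ff_img_sub[OF P] by blast
next
  show "Ep \<subseteq> ff P ` ESs"
  proof
    fix x assume "x \<in> Ep"
    then have "x \<in> ESs" "ff P x = x" using Ep_ESs by blast+
    then show "x \<in> ff P ` ESs" by force
  qed
qed

end


context sd begin

lemma ff_nl_id: "\<not> lp \<Longrightarrow> fst y \<noteq> x1 \<Longrightarrow> fst y \<noteq> x2 \<Longrightarrow> ff P y = y"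
  by (simp add: ff_def)
lemma ff_nl_e: "\<not> lp \<Longrightarrow> fst y = x1 \<or> fst y = x2 \<Longrightarrow> ff P y = econn {} al g P y"
  by (simp add: ff_def)
lemma ff_l_id: "lp \<Longrightarrow> fst y \<noteq> x2 \<Longrightarrow> ff P y = y"
  by (simp add: ff_def)
lemma ff_l_x2: "lp \<Longrightarrow> ff P (x2, i) = (x1, rv a i)"
  by (simp add: ff_def)

lemma notV_D: "\<not> lp \<Longrightarrow> u \<in> Dp \<Longrightarrow> u \<noteq> x1 \<and> u \<noteq> x2"
  using Dp_nl by auto

lemma sm_nl_D:
  assumes P: "P \<in> AA" and nl: "\<not> lp" and u: "u \<in> Dp" and i: "i < g u"
    and y: "y = vconn H s g (u,i) \<or> y = econn {} al g P (u,i)"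
  shows "(ff P (u,i), ff P y) \<in> (rp (Phi P))\<^sup>*"
proof -
  have uH: "u \<in> H" using u D_H by auto
  have xEp: "(u,i) \<in> Ep" using u i by (simp add: strand_ends_def)
  have ffx: "ff P (u,i) = (u,i)" using ff_nl_id[OF nl] notV_D[OF nl u] by simp
  from y show ?thesis
  proof
    assume y: "y = vconn H s g (u,i)"
    have "fst y \<in> {s u, s (s u)}" using vconn_invol(1)[OF uH i] y by simp
    moreover have "s u \<in> Dp" "s (s u) \<in> Dp" using D_facts(5)[OF nl] u by blast+
    ultimately have "fst y \<in> Dp" by auto
    then have "ff P y = y" using ff_nl_id[OF nl] notV_D[OF nl] by blast
    moreover have "((u,i), vconn H s g (u,i)) \<in> rp (Phi P)" using rp_v[OF xEp, of "Phi P"] vconn_p[OF u] by simp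
    ultimately show ?thesis using ffx y by (simp add: r_into_rtrancl)
  next
    assume y: "y = econn {} al g P (u,i)"
    consider "u = al x1" | "u = al x2" | "u \<noteq> al x1" "u \<noteq> al x2" by blast
    then show ?thesis
    proof cases
      case 1
      then have i': "i < a" using i gax1 by simp
      have y1: "y = (x1, tr al (al x1) a (P ex1) i)" using y 1 econn_ax1[OF P i'] by simp
      have "ff P y = econn {} al g P y" using ff_nl_e[OF nl] y1 by simp
      also have "\<dots> = (al x1, i)" using y1 econn_x1[OF P tr_lt1[OF P i', where al'=al and u="al x1"]] tr_x1_ax1[OF P i'] by simp
      finally show ?thesis using ffx 1 by simp
    next
      case 2
      then have i': "i < a" using i gax2 by simp
      have y1: "y = (x2, tr al (al x2) a (P ex2) i)" using y 2 econn_ax2[OF P i'] by simp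
      have "ff P y = econn {} al g P y" using ff_nl_e[OF nl] y1 by simp
      also have "\<dots> = (al x2, i)" using y1 econn_x2[OF P tr_lt2[OF P i', where al'=al and u="al x2"]] tr_x2_ax2[OF P i'] by simp
      finally show ?thesis using ffx 2 by simp
    next
      case 3
      have ye: "y = econn Cp alp g (Phi P) (u,i)" using y econn_p_other[OF P nl u 3 i] by simp
      have "fst y = alp u" using ye econn_tr[of u Cp i g "Phi P" alp] i Cp_nl[OF nl]
          P_edge_gen[OF Phi_in[OF P] u D_facts(4)[OF nl u]] by simp
      then have "fst y \<in> Dp" using D_facts(1)[OF nl u] by simp
      then have "ff P y = y" using ff_nl_id[OF nl] notV_D[OF nl] by blast
      then show ?thesis using ffx ye rp_e[OF xEp, of "Phi P"] by (simp add: r_into_rtrancl)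
    qed
  qed
qed

lemma sm_nl_x1:
  assumes P: "P \<in> AA" and nl: "\<not> lp" and i: "i < a"
    and y: "y = vconn H s g (x1,i) \<or> y = econn {} al g P (x1,i)"
  shows "(ff P (x1,i), ff P y) \<in> (rp (Phi P))\<^sup>*"
proof -
  let ?t = "tr al x1 a (P ex1) i"
  have ffx: "ff P (x1,i) = (al x1, ?t)" using ff_nl_e[OF nl] econn_x1[OF P i] by simp
  have t: "?t < a" using tr_lt1[OF P i] .
  from y show ?thesis
  proof
    assume y: "y = vconn H s g (x1,i)"
    then have y1: "y = (x2, rv a i)" using vconn_x1[OF i] by simp
    have "ff P y = (al x2, tr al x2 a (P ex2) (rv a i))"
      using ff_nl_e[OF nl] y1 econn_x2[OF P rv_lt2[OF i]] by simp
    moreover have "econn Cp alp g (Phi P) (al x1, ?t) = (al x2, tr al x2 a (P ex2) (rv a i))"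
      using econn_p_ax1[OF P nl t] Mf_app tr_ax1_x1[OF P i] by simp
    moreover have "(al x1, ?t) \<in> Ep" using ax1_D[OF nl] gax1 t by (simp add: strand_ends_def)
    ultimately show ?thesis using ffx rp_e by (metis r_into_rtrancl)
  next
    assume y: "y = econn {} al g P (x1,i)"
    then have y1: "y = (al x1, ?t)" using econn_x1[OF P i] by simp
    have "ff P y = y" using ff_nl_id[OF nl] y1 notV_D[OF nl ax1_D[OF nl]] by simp
    then show ?thesis using ffx y1 by simp
  qed
qed

lemma sm_nl_x2:
  assumes P: "P \<in> AA" and nl: "\<not> lp" and i: "i < a"
    and y: "y = vconn H s g (x2,i) \<or> y = econn {} al g P (x2,i)"
  shows "(ff P (x2,i), ff P y) \<in> (rp (Phi P))\<^sup>*"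
proof -
  let ?t = "tr al x2 a (P ex2) i"
  have ffx: "ff P (x2,i) = (al x2, ?t)" using ff_nl_e[OF nl] econn_x2[OF P i] by simp
  have t: "?t < a" using tr_lt2[OF P i] .
  from y show ?thesis
  proof
    assume y: "y = vconn H s g (x2,i)"
    then have y1: "y = (x1, rv a i)" using vconn_x2[OF i] by simp
    let ?t1 = "tr al x1 a (P ex1) (rv a i)"
    have ffy: "ff P y = (al x1, ?t1)"
      using ff_nl_e[OF nl] y1 econn_x1[OF P rv_lt2[OF i]] by simp
    have "Mf P ?t1 = ?t"
      using Mf_app tr_ax1_x1[OF P rv_lt2[OF i]] by simp
    then have "inv (Mf P) ?t = ?t1" using permutes_inverses(2)[OF Mf_perm[OF P]] by metis
    then have "econn Cp alp g (Phi P) (al x2, ?t) = (al x1, ?t1)"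
      using econn_p_ax2[OF P nl t] by simp
    moreover have "(al x2, ?t) \<in> Ep" using ax2_D[OF nl] gax2 t by (simp add: strand_ends_def)
    ultimately show ?thesis using ffx ffy rp_e by (metis r_into_rtrancl)
  next
    assume y: "y = econn {} al g P (x2,i)"
    then have y1: "y = (al x2, ?t)" using econn_x2[OF P i] by simp
    have "ff P y = y" using ff_nl_id[OF nl] y1 notV_D[OF nl ax2_D[OF nl]] by simp
    then show ?thesis using ffx y1 by simp
  qed
qed

lemma sm_l_x1:
  assumes P: "P \<in> AA" and l: "lp" and i: "i < a"
    and y: "y = vconn H s g (x1,i) \<or> y = econn {} al g P (x1,i)"
  shows "(ff P (x1,i), ff P y) \<in> (rp (Phi P))\<^sup>*"
proof -
  have ffx: "ff P (x1,i) = (x1,i)" using ff_l_id[OF l] x12 by simp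
  from y show ?thesis
  proof
    assume y: "y = vconn H s g (x1,i)"
    then have "ff P y = (x1, i)" using vconn_x1[OF i] ff_l_x2[OF l] by simp
    then show ?thesis using ffx by simp
  next
    assume y: "y = econn {} al g P (x1,i)"
    let ?t = "tr al x1 a (P ex1) i"
    have y1: "y = (x2, ?t)" using y econn_x1[OF P i] l lp_iff by simp
    have "ff P y = (x1, pil P i)" using ff_l_x2[OF l] y1 by (simp add: pil_def)
    moreover have "econn Cp alp g (Phi P) (x1, i) = (x1, pil P i)"
      using econn_p_l[OF l] Phi_l[OF l] by simp
    moreover have "(x1, i) \<in> Ep" using Cp_l[OF l] i by (simp add: strand_ends_def)
    ultimately show ?thesis using ffx rp_e by (metis r_into_rtrancl)
  qed
qed

lemma sm_l_x2:
  assumes P: "P \<in> AA" and l: "lp" and i: "i < a"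
    and y: "y = vconn H s g (x2,i) \<or> y = econn {} al g P (x2,i)"
  shows "(ff P (x2,i), ff P y) \<in> (rp (Phi P))\<^sup>*"
proof -
  have ffx: "ff P (x2,i) = (x1, rv a i)" using ff_l_x2[OF l] by simp
  from y show ?thesis
  proof
    assume y: "y = vconn H s g (x2,i)"
    then have "y = (x1, rv a i)" using vconn_x2[OF i] by simp
    then have "ff P y = (x1, rv a i)" using ff_l_id[OF l] x12 by simp
    then show ?thesis using ffx by simp
  next
    assume y: "y = econn {} al g P (x2,i)"
    have a1: "al x1 = x2" "al x2 = x1" using l lp_iff lp_iff2 by blast+
    have e21: "ex2 = ex1" using a1 by auto
    let ?t = "tr al x2 a (P ex1) i"
    have y1: "y = (x1, ?t)" using y econn_x2[OF P i] a1 e21 by simp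
    have ffy: "ff P y = (x1, ?t)" using ff_l_id[OF l] y1 x12 by simp
    have t: "?t < a" using tr_lt1[OF P i] .
    have "tr al x1 a (P ex1) ?t = i"
      using tr_x1_ax1[OF P i] a1 by simp
    then have pt: "pil P ?t = rv a i" by (simp add: pil_def)
    have st: "((x1, w), (x1, pil P w)) \<in> rp (Phi P)" if "w < a" for w
    proof -
      have "(x1, w) \<in> Ep" using Cp_l[OF l] that by (simp add: strand_ends_def)
      then show ?thesis using rp_e econn_p_l[OF l] Phi_l[OF l] by metis
    qed
    have "((x1, pil P ?t), (x1, ?t)) \<in> (rp (Phi P))\<^sup>*"
      by (rule perm_back[OF pil_perm[OF P] st t])
    then show ?thesis using ffx ffy pt by simp
  qed
qed

end


context sd begin

lemma step_map:
  assumes P: "P \<in> AA" and x: "x \<in> ESs" and xy: "(x,y) \<in> rr P"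
  shows "y \<in> ESs \<and> (ff P x, ff P y) \<in> (rp (Phi P))\<^sup>*"
proof -
  obtain u i where ui: "x = (u,i)" "u \<in> S" "u \<in> H" "i < g u" "u \<noteq> h" using ESs_cases[OF x] by blast
  have y: "y = vconn H s g (u,i) \<or> y = econn {} al g P (u,i)"
    using xy ui by (auto simp: strand_rel_def)
  have yE: "y \<in> EE" using rr_sym[OF P xy] by blast
  have u0: "u \<notin> {h0, al h0}" using h0S ui by blast
  have "fst y \<in> S"
  proof -
    from y show ?thesis
    proof
      assume "y = vconn H s g (u,i)"
      then have "fst y \<in> {s u, s (s u)}" using vconn_invol(1)[OF ui(3,4)] by simp
      then show ?thesis using side_s[OF ui(2)] side_s[OF side_s[OF ui(2)]] by auto
    next
      assume "y = econn {} al g P (u,i)"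
      then have "fst y = al u" using econn_G(1)[OF P ui(3,4)] by simp
      then show ?thesis using side_al[OF ui(2)] u0 by auto
    qed
  qed
  then have yS: "y \<in> ESs" using yE by simp
  have "(ff P (u,i), ff P y) \<in> (rp (Phi P))\<^sup>*"
  proof (cases lp)
    case True
    then have "u = x1 \<or> u = x2" using ui loop_S by auto
    then show ?thesis
    proof
      assume u: "u = x1"
      then show ?thesis using sm_l_x1[OF P True _ y[unfolded u]] ui by simp
    next
      assume u: "u = x2"
      then show ?thesis using sm_l_x2[OF P True _ y[unfolded u]] ui ga by simp
    qed
  next
    case False
    consider "u = x1" | "u = x2" | "u \<noteq> x1" "u \<noteq> x2" by blast
    then show ?thesis
    proof cases
      case 1 then show ?thesis using sm_nl_x1[OF P False _ y[unfolded 1]] ui by simp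
    next
      case 2 then show ?thesis using sm_nl_x2[OF P False _ y[unfolded 2]] ui ga by simp
    next
      case 3
      then have "u \<in> Dp" using ui Dp_nl[OF False] by auto
      then show ?thesis using sm_nl_D[OF P False _ ui(4) y] by simp
    qed
  qed
  then show ?thesis using yS ui by simp
qed

lemma rr_closure:
  assumes P: "P \<in> AA" and x: "x \<in> ESs" and xy: "(x,y) \<in> (rr P)\<^sup>*"
  shows "y \<in> ESs \<and> (ff P x, ff P y) \<in> (rp (Phi P))\<^sup>*"
  using xy
proof (induction rule: rtrancl_induct)
  case base then show ?case using x by simp
next
  case (step y z)
  then show ?case using step_map[OF P, of y z] by (meson rtrancl_trans)
qed

lemma curves_iff:
  assumes P: "P \<in> AA" and x: "x \<in> ESs" and y: "y \<in> ESs"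
  shows "(x,y) \<in> (rr P)\<^sup>* \<longleftrightarrow> (ff P x, ff P y) \<in> (rp (Phi P))\<^sup>*"
proof
  assume "(x,y) \<in> (rr P)\<^sup>*" then show "(ff P x, ff P y) \<in> (rp (Phi P))\<^sup>*" using rr_closure[OF P x] by blast
next
  assume a: "(ff P x, ff P y) \<in> (rp (Phi P))\<^sup>*"
  have "rp (Phi P) \<subseteq> (rr P)\<^sup>*" using rp_sub[OF P] by auto
  then have "(rp (Phi P))\<^sup>* \<subseteq> (rr P)\<^sup>*" by (rule rtrancl_subset_rtrancl)
  then have "(ff P x, ff P y) \<in> (rr P)\<^sup>*" using a by blast
  moreover have "(x, ff P x) \<in> (rr P)\<^sup>*" "(ff P y, y) \<in> (rr P)\<^sup>*" using ff_conn[OF P x] ff_conn[OF P y] by blast+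
  ultimately show "(x,y) \<in> (rr P)\<^sup>*" by (meson rtrancl_trans)
qed

lemma finESs: "finite ESs" using finEE by simp

lemma side_curves:
  assumes P: "P \<in> AA"
  shows "card (ESs // (rr P)\<^sup>*) = ncurves Dp s alp Cp g (Phi P)"
  unfolding ncurves_def
  by (rule card_quotient_map[OF finESs ff_img[OF P] curves_iff[OF P]])

lemma ESs_closed: "P \<in> AA \<Longrightarrow> x \<in> ESs \<Longrightarrow> (x,y) \<in> (rr P)\<^sup>* \<Longrightarrow> y \<in> ESs"
  using rr_closure by blast

end


context sd begin

lemma V_eq: assumes "u \<in> {h, x1, x2}" shows "{u, s u, s (s u)} = {h, x1, x2}"
proof -
  have a1: "s x2 = h" by (rule sx2)
  have a2: "s (s x2) = x1" using sx2 by simp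
  consider "u = h" | "u = x1" | "u = x2" using assms by blast
  then show ?thesis
  proof cases
    case 1 then show ?thesis by simp
  next
    case 2
    have "{x1, s x1, s (s x1)} = {x1, x2, h}" using a1 by simp
    then show ?thesis using 2 by blast
  next
    case 3
    have "{x2, s x2, s (s x2)} = {x2, h, x1}" using a1 a2 by simp
    then show ?thesis using 3 by blast
  qed
qed

lemma verts_side:
  shows "(\<lambda>u. {u, s u, s (s u)}) ` S = insert {h, x1, x2} (verts Dp s)"
    and "{h, x1, x2} \<notin> verts Dp s"
proof -
  show "(\<lambda>u. {u, s u, s (s u)}) ` S = insert {h, x1, x2} (verts Dp s)"
  proof
    show "(\<lambda>u. {u, s u, s (s u)}) ` S \<subseteq> insert {h, x1, x2} (verts Dp s)"
    proof
      fix v assume "v \<in> (\<lambda>u. {u, s u, s (s u)}) ` S"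
      then obtain u where u: "u \<in> S" "v = {u, s u, s (s u)}" unfolding image_iff by (elim bexE) simp
      show "v \<in> insert {h, x1, x2} (verts Dp s)"
      proof (cases "u \<in> {h, x1, x2}")
        case True then have "v = {h, x1, x2}" using V_eq[OF True] u(2) by simp
        then show ?thesis by simp
      next
        case False
        have "\<not> lp"
        proof
          assume "lp" then have "S = {h, x1, x2}" by (rule loop_S)
          then show False using u(1) False by simp
        qed
        then have "u \<in> Dp" using Dp_nl False u(1) by simp
        then have "v \<in> verts Dp s" using u(2) unfolding verts_def by (rule rev_image_eqI)
        then show ?thesis by simp
      qed
    qed
  next
    show "insert {h, x1, x2} (verts Dp s) \<subseteq> (\<lambda>u. {u, s u, s (s u)}) ` S"
    proof -
      have "{h, x1, x2} \<in> (\<lambda>u. {u, s u, s (s u)}) ` S" using hS by (rule rev_image_eqI) simp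
      moreover have "verts Dp s \<subseteq> (\<lambda>u. {u, s u, s (s u)}) ` S" unfolding verts_def using D_S by (rule image_mono)
      ultimately show ?thesis by blast
    qed
  qed
  show "{h, x1, x2} \<notin> verts Dp s"
  proof
    assume "{h, x1, x2} \<in> verts Dp s"
    then obtain u where u: "u \<in> Dp" "{h, x1, x2} = {u, s u, s (s u)}" by (auto simp: verts_def)
    have nl: "\<not> lp" using u Dp_l by auto
    have "s u \<in> Dp" "s (s u) \<in> Dp" using D_facts(5)[OF nl] u by blast+
    have "h \<in> {u, s u, s (s u)}" using u(2) by (metis insertI1)
    then have "h \<in> Dp" using u(1) \<open>s u \<in> Dp\<close> \<open>s (s u) \<in> Dp\<close> by blast
    then show False using Dp_nl[OF nl] by auto
  qed
qed

lemma vfac_V: "vfactor s g {h, x1, x2} = fact (a + 1) * fact a"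
proof -
  have e: "erep {h, x1, x2} \<in> {h, x1, x2}" unfolding erep_def by (rule someI[of _ h]) simp
  have n1: "(0 + a + a) div 2 + 1 = a + 1" "(a + a + 0) div 2 + 1 = a + 1" "(a + 0 + a) div 2 + 1 = a + 1"
    by simp_all
  have n2: "(0 + a - a) div 2 = 0" "(a + 0 - a) div 2 = 0" "(a + a - 0) div 2 = a"
    by simp_all
  have g3: "g (s x2) = 0" "g (s (s x2)) = a" using gh sx2 by simp_all
  consider "erep {h, x1, x2} = h" | "erep {h, x1, x2} = x1" | "erep {h, x1, x2} = x2" using e by blast
  then show ?thesis
  proof cases
    case 1
    have "vfactor s g {h, x1, x2} = fact ((g h + a + g x2) div 2 + 1) * fact ((g h + a - g x2) div 2) *
        fact ((g h + g x2 - a) div 2) * fact ((a + g x2 - g h) div 2)"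
      unfolding vfactor_def Let_def 1 by (rule refl)
    then show ?thesis unfolding gh ga n1 n2 by simp
  next
    case 2
    have "vfactor s g {h, x1, x2} = fact ((a + g x2 + g (s x2)) div 2 + 1) * fact ((a + g x2 - g (s x2)) div 2) *
        fact ((a + g (s x2) - g x2) div 2) * fact ((g x2 + g (s x2) - a) div 2)"
      unfolding vfactor_def Let_def 2 by (rule refl)
    then show ?thesis unfolding g3 ga n1 n2 by simp
  next
    case 3
    have "vfactor s g {h, x1, x2} = fact ((g x2 + g (s x2) + g (s (s x2))) div 2 + 1) * fact ((g x2 + g (s x2) - g (s (s x2))) div 2) *
        fact ((g x2 + g (s (s x2)) - g (s x2)) div 2) * fact ((g (s x2) + g (s (s x2)) - g x2) div 2)"
      unfolding vfactor_def Let_def 3 by (rule refl)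
    then show ?thesis unfolding g3 ga n1 n2 by simp
  qed
qed

end


context sd begin

lemma card_TT: "card TT = (if lp then 1 else fact a)"
  using card_permutations[of "{..<a}" a] by (simp add: TT_def)

lemma finTT: "finite TT" by (simp add: TT_def finite_permutations)

lemma sqrt_vf: "sqrt (vfactor s g {h, x1, x2}) = fact a * sqrt (real a + 1)"
proof -
  have "vfactor s g {h, x1, x2} = (real a + 1) * (fact a * fact a)"
    unfolding vfac_V by (simp add: algebra_simps)
  then have "sqrt (vfactor s g {h, x1, x2}) = sqrt (real a + 1) * sqrt (fact a * fact a)"
    by (simp add: real_sqrt_mult)
  then show ?thesis by simp
qed

lemma delta_eq: "real (card TT) * (1 / sqrt (vfactor s g {h, x1, x2})) = delta s al g h"
proof -
  have fa: "(fact a :: real) > 0" by simp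
  have sa: "sqrt (real a + 1) > 0" by simp
  show ?thesis
  proof (cases lp)
    case True
    then show ?thesis unfolding sqrt_vf card_TT delta_def Let_def by simp
  next
    case False
    then show ?thesis unfolding sqrt_vf card_TT delta_def Let_def using fa sa by simp
  qed
qed

lemma finAp: "finite Ap"
proof -
  have "finite (edges Dp alp Cp)"
  proof (cases lp)
    case True then show ?thesis using edges_piece_l by simp
  next
    case False then show ?thesis using edges_piece_nl finESr by simp
  qed
  then show ?thesis unfolding perm_assignments_def by (intro finite_PiE) (simp_all add: finite_permutations)
qed

end


lemma sum_prod_split: "(\<Sum>(x,y)\<in>A \<times> B. f x * (g y :: real)) = sum f A * sum g B"
  by (simp add: sum_product sum.cartesian_product)

context bs begin

lemma sd0: "sd H s al g h0 h0"
  by (unfold_locales) simp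

lemma sd1: "sd H s al g h0 (al h0)"
  by (unfold_locales) simp

abbreviation "S1 \<equiv> side H s al h0 h0"
abbreviation "S2 \<equiv> side H s al h0 (al h0)"

lemma h0_S1: "h0 \<in> S1" using side_self h0H by auto
lemma ah0_S2: "al h0 \<in> S2" using side_self h0H alH by auto
lemma h0_S2: "h0 \<notin> S2" using h0_S1 sides_disjoint by auto
lemma ah0_S1: "al h0 \<notin> S1" using ah0_S2 sides_disjoint by auto

lemma edges_split:
  "edges H al {} = {e \<in> edges H al {}. e \<subseteq> S1} \<union> {e \<in> edges H al {}. e \<subseteq> S2} \<union> {{h0, al h0}}"
proof
  show "edges H al {} \<subseteq> {e \<in> edges H al {}. e \<subseteq> S1} \<union> {e \<in> edges H al {}. e \<subseteq> S2} \<union> {{h0, al h0}}"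
  proof
    fix e assume e: "e \<in> edges H al {}"
    then obtain u where u: "u \<in> H" "e = {u, al u}" by (auto simp: edges_def)
    show "e \<in> {e \<in> edges H al {}. e \<subseteq> S1} \<union> {e \<in> edges H al {}. e \<subseteq> S2} \<union> {{h0, al h0}}"
    proof (cases "u = h0 \<or> u = al h0")
      case True
      then have "e = {h0, al h0}" using u al2[OF h0H] by auto
      then show ?thesis by simp
    next
      case False
      then have "u \<in> S1 \<or> u \<in> S2" using u sides_union by auto
      then have "e \<subseteq> S1 \<or> e \<subseteq> S2" using side_al False u by auto
      then show ?thesis using e by auto
    qed
  qed
next
  have "{h0, al h0} \<in> edges H al {}" using edge_in[OF h0H] .
  then show "{e \<in> edges H al {}. e \<subseteq> S1} \<union> {e \<in> edges H al {}. e \<subseteq> S2} \<union> {{h0, al h0}} \<subseteq> edges H al {}"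
    by auto
qed

lemma edges_disj:
  "{e \<in> edges H al {}. e \<subseteq> S1} \<inter> {e \<in> edges H al {}. e \<subseteq> S2} = {}"
  "{h0, al h0} \<notin> {e \<in> edges H al {}. e \<subseteq> S1} \<union> {e \<in> edges H al {}. e \<subseteq> S2}"
proof -
  show "{e \<in> edges H al {}. e \<subseteq> S1} \<inter> {e \<in> edges H al {}. e \<subseteq> S2} = {}"
    using sides_disjoint by (auto simp: edges_def)
  show "{h0, al h0} \<notin> {e \<in> edges H al {}. e \<subseteq> S1} \<union> {e \<in> edges H al {}. e \<subseteq> S2}"
    using h0_S2 ah0_S1 by auto
qed

lemma finEdges: "finite (edges H al {})" using finH by (simp add: edges_def)

lemma EE_split: "EE = {x \<in> EE. fst x \<in> S1} \<union> {x \<in> EE. fst x \<in> S2}"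
  "{x \<in> EE. fst x \<in> S1} \<inter> {x \<in> EE. fst x \<in> S2} = {}"
  using sides_union sides_disjoint by (auto simp: strand_ends_def)

lemma e0_id: assumes "P \<in> perm_assignments H al {} g" shows "P {h0, al h0} = id"
proof -
  have "P {h0, al h0} permutes {..<g h0}" using P_edge[OF assms h0H] .
  then show ?thesis using g0 by simp
qed

lemma g_erep0: "g (erep {h0, al h0}) = 0"
  using erep_in[of h0 "al h0"] g0 g_al[OF h0H] by auto

end


lemma sum4: "(\<Sum>(x,y,z,t)\<in>A \<times> B \<times> C \<times> D. f x * (g y :: real)) = sum f A * sum g B * real (card C * card D)"
proof -
  have "(\<Sum>(x,y,z,t)\<in>A \<times> B \<times> C \<times> D. f x * g y) = (\<Sum>x\<in>A. \<Sum>(y,z,t)\<in>B \<times> C \<times> D. f x * g y)"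
    by (rule sum.cartesian_product[symmetric])
  also have "\<dots> = (\<Sum>x\<in>A. \<Sum>y\<in>B. \<Sum>(z,t)\<in>C \<times> D. f x * g y)"
    by (simp only: sum.cartesian_product[symmetric])
  also have "\<dots> = (\<Sum>x\<in>A. \<Sum>y\<in>B. f x * g y * real (card C * card D))"
    by (simp add: card_cartesian_product mult.commute)
  also have "\<dots> = (\<Sum>x\<in>A. f x * (sum g B * real (card C * card D)))"
    by (simp add: sum_distrib_left sum_distrib_right mult.assoc)
  also have "\<dots> = sum f A * sum g B * real (card C * card D)"
    by (simp add: sum_distrib_right mult.assoc)
  finally show ?thesis .
qed
context bs begin

lemma main:
  "unitary H s al {} g =
      unitary (piece_darts H s al h0 h0) s (piece_al s al h0) (piece_circles s al h0) g *
      unitary (piece_darts H s al h0 (al h0)) s (piece_al s al (al h0)) (piece_circles s al (al h0)) g *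
      delta s al g h0 * delta s al g (al h0)"
proof -
  interpret A: sd H s al g h0 h0 by (rule sd0)
  interpret B: sd H s al g h0 "al h0" by (rule sd1)
  define F where "F P = (\<Prod>e\<in>edges H al {}. real_of_int (sign (P e))) * (-2) ^ ncurves H s al {} g P" for P
  define F1 where "F1 Q = (\<Prod>e\<in>edges A.Dp A.alp A.Cp. real_of_int (sign (Q e))) * (-2) ^ ncurves A.Dp s A.alp A.Cp g Q" for Q
  define F2 where "F2 Q = (\<Prod>e\<in>edges B.Dp B.alp B.Cp. real_of_int (sign (Q e))) * (-2) ^ ncurves B.Dp s B.alp B.Cp g Q" for Q
  have pen: "penrose H s al {} g = sum F A.AA" by (simp add: penrose_def F_def)
  have pen1: "penrose A.Dp s A.alp A.Cp g = sum F1 A.Ap" by (simp add: penrose_def F1_def)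
  have pen2: "penrose B.Dp s B.alp B.Cp g = sum F2 B.Ap" by (simp add: penrose_def F2_def)
  have sides2: "B.S = S2" by simp
  have Fsplit: "F P = F1 (A.Phi P) * F2 (B.Phi P)" if P: "P \<in> A.AA" for P
  proof -
    have fin: "finite A.ES" "finite B.ES" using A.finES B.finES by auto
    have "(\<Prod>e\<in>edges H al {}. real_of_int (sign (P e))) =
      (\<Prod>e\<in>A.ES. real_of_int (sign (P e))) * (\<Prod>e\<in>B.ES. real_of_int (sign (P e))) * real_of_int (sign (P {h0, al h0}))"
    proof -
      have "(\<Prod>e\<in>edges H al {}. real_of_int (sign (P e))) =
        (\<Prod>e\<in>A.ES \<union> B.ES. real_of_int (sign (P e))) * (\<Prod>e\<in>{{h0, al h0}}. real_of_int (sign (P e)))"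
        by (subst edges_split, rule prod.union_disjoint) (use fin edges_disj in auto)
      also have "(\<Prod>e\<in>A.ES \<union> B.ES. real_of_int (sign (P e))) =
        (\<Prod>e\<in>A.ES. real_of_int (sign (P e))) * (\<Prod>e\<in>B.ES. real_of_int (sign (P e)))"
        by (rule prod.union_disjoint) (use fin edges_disj in auto)
      finally show ?thesis by simp
    qed
    also have "\<dots> = (\<Prod>e\<in>edges A.Dp A.alp A.Cp. real_of_int (sign (A.Phi P e))) *
        (\<Prod>e\<in>edges B.Dp B.alp B.Cp. real_of_int (sign (B.Phi P e)))"
      using A.sign_side[OF P] B.sign_side[OF P] e0_id[OF P] by simp
    finally have sg: "(\<Prod>e\<in>edges H al {}. real_of_int (sign (P e))) = \<dots>" .
    have nc: "ncurves H s al {} g P = ncurves A.Dp s A.alp A.Cp g (A.Phi P) + ncurves B.Dp s B.alp B.Cp g (B.Phi P)"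
    proof -
      have "ncurves H s al {} g P = card (A.ESs // (rr P)\<^sup>*) + card (B.ESs // (rr P)\<^sup>*)"
        unfolding ncurves_def
        by (rule card_quotient_split[OF finEE EE_split(1) EE_split(2)])
           (use A.ESs_closed[OF P] B.ESs_closed[OF P] in blast)+
      then show ?thesis using A.side_curves[OF P] B.side_curves[OF P] by simp
    qed
    show ?thesis unfolding F_def F1_def F2_def sg nc by (simp add: power_add algebra_simps)
  qed
  define Psi where "Psi P = (A.Phi P, B.Phi P, A.tau P, B.tau P)" for P
  have inj: "inj_on Psi A.AA"
  proof (rule inj_onI)
    fix P Q assume P: "P \<in> A.AA" and Q: "Q \<in> A.AA" and eq: "Psi P = Psi Q"
    then have eqs: "A.Phi P = A.Phi Q" "B.Phi P = B.Phi Q" "A.tau P = A.tau Q" "B.tau P = B.tau Q"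
      by (auto simp: Psi_def)
    show "P = Q"
    proof (rule PiE_ext)
      show "P \<in> Pi\<^sub>E (edges H al {}) (\<lambda>e. {\<pi>. \<pi> permutes {..<g (erep e)}})" using P by (simp add: perm_assignments_def)
      show "Q \<in> Pi\<^sub>E (edges H al {}) (\<lambda>e. {\<pi>. \<pi> permutes {..<g (erep e)}})" using Q by (simp add: perm_assignments_def)
      fix e assume e: "e \<in> edges H al {}"
      then consider "e \<in> A.ES" | "e \<in> B.ES" | "e = {h0, al h0}" using edges_split by blast
      then show "P e = Q e"
      proof cases
        case 1 then show ?thesis using A.inj_side[OF P Q eqs(1) eqs(3)] by blast
      next
        case 2 then show ?thesis using B.inj_side[OF P Q eqs(2) eqs(4)] by blast
      next
        case 3 then show ?thesis using e0_id[OF P] e0_id[OF Q] by simp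
      qed
    qed
  qed
  let ?Prod = "A.Ap \<times> B.Ap \<times> A.TT \<times> B.TT"
  have sub: "Psi ` A.AA \<subseteq> ?Prod"
    using A.Phi_in B.Phi_in A.tau_in B.tau_in by (auto simp: Psi_def)
  have finProd: "finite ?Prod" using A.finAp B.finAp A.finTT B.finTT by simp
  have cardAA: "card A.AA = card ?Prod"
  proof -
    have "card A.AA = (\<Prod>e\<in>edges H al {}. fact (g (erep e)))" by (rule card_perm_assign[OF finEdges])
    also have "\<dots> = (\<Prod>e\<in>A.ES \<union> B.ES. fact (g (erep e))) * (\<Prod>e\<in>{{h0, al h0}}. fact (g (erep e)))"
      by (subst edges_split, rule prod.union_disjoint) (use A.finES B.finES edges_disj in auto)
    also have "(\<Prod>e\<in>A.ES \<union> B.ES. fact (g (erep e))) = (\<Prod>e\<in>A.ES. fact (g (erep e))) * (\<Prod>e\<in>B.ES. fact (g (erep e)))"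
      by (rule prod.union_disjoint) (use A.finES B.finES edges_disj in auto)
    finally have "card A.AA = (card A.Ap * card A.TT) * (card B.Ap * card B.TT)"
      using A.card_side B.card_side g_erep0 by simp
    then show ?thesis by (simp add: card_cartesian_product)
  qed
  have img: "Psi ` A.AA = ?Prod"
    by (rule card_subset_eq[OF finProd sub]) (simp add: card_image[OF inj] cardAA)
  have sumeq: "sum F A.AA = sum F1 A.Ap * sum F2 B.Ap * real (card A.TT * card B.TT)"
  proof -
    define G where "G = (\<lambda>(x,y,z::nat\<Rightarrow>nat,t::nat\<Rightarrow>nat). F1 x * F2 y)"
    have "sum F A.AA = sum (G \<circ> Psi) A.AA"
      by (rule sum.cong) (simp_all add: Fsplit Psi_def G_def)
    also have "\<dots> = sum G (Psi ` A.AA)" by (rule sum.reindex[OF inj, symmetric])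
    also have "\<dots> = sum G ?Prod" using img by simp
    also have "\<dots> = sum F1 A.Ap * sum F2 B.Ap * real (card A.TT * card B.TT)"
      unfolding G_def by (rule sum4)
    finally show ?thesis .
  qed
  define w where "w v = 1 / sqrt (vfactor s g v)" for v
  define V where "V u = {u, s u, s (s u)}" for u
  have vH: "verts H s = V ` A.S \<union> V ` B.S" unfolding verts_def V_def using sides_union by blast
  have vdisj: "V ` A.S \<inter> V ` B.S = {}"
  proof (rule ccontr)
    assume "V ` A.S \<inter> V ` B.S \<noteq> {}"
    then obtain u u' where u: "u \<in> A.S" "u' \<in> B.S" "V u = V u'" by blast
    have "u \<in> V u" by (simp add: V_def)
    then have "u \<in> V u'" using u(3) by simp
    moreover have "V u' \<subseteq> B.S" using u(2) side_s by (auto simp: V_def)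
    ultimately show False using u(1) sides_disjoint by auto
  qed
  have vA: "V ` A.S = insert {h0, s h0, s (s h0)} (verts A.Dp s)" "{h0, s h0, s (s h0)} \<notin> verts A.Dp s"
    using A.verts_side unfolding V_def by auto
  have vB: "V ` B.S = insert {al h0, s (al h0), s (s (al h0))} (verts B.Dp s)" "{al h0, s (al h0), s (s (al h0))} \<notin> verts B.Dp s"
    using B.verts_side unfolding V_def by auto
  have finv: "finite (verts A.Dp s)" "finite (verts B.Dp s)" using A.finD B.finD by (simp_all add: verts_def)
  have prodv: "(\<Prod>v\<in>verts H s. w v) =
      (w {h0, s h0, s (s h0)} * (\<Prod>v\<in>verts A.Dp s. w v)) * (w {al h0, s (al h0), s (s (al h0))} * (\<Prod>v\<in>verts B.Dp s. w v))"
  proof -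
    have "(\<Prod>v\<in>verts H s. w v) = (\<Prod>v\<in>V ` A.S. w v) * (\<Prod>v\<in>V ` B.S. w v)"
      unfolding vH by (rule prod.union_disjoint) (use vdisj vA vB finv in auto)
    then show ?thesis unfolding vA(1) vB(1) using vA(2) vB(2) finv by simp
  qed
  have d1: "real (card A.TT) * w {h0, s h0, s (s h0)} = delta s al g h0" using A.delta_eq by (simp add: w_def)
  have d2: "real (card B.TT) * w {al h0, s (al h0), s (s (al h0))} = delta s al g (al h0)" using B.delta_eq by (simp add: w_def)
  have uG: "unitary H s al {} g = sum F A.AA * (\<Prod>v\<in>verts H s. w v)" by (simp add: unitary_def pen w_def)
  have u1: "unitary A.Dp s A.alp A.Cp g = sum F1 A.Ap * (\<Prod>v\<in>verts A.Dp s. w v)" by (simp add: unitary_def pen1 w_def)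
  have u2: "unitary B.Dp s B.alp B.Cp g = sum F2 B.Ap * (\<Prod>v\<in>verts B.Dp s. w v)" by (simp add: unitary_def pen2 w_def)
  show ?thesis
    unfolding uG u1 u2 sumeq prodv d1[symmetric] d2[symmetric] by (simp add: algebra_simps)
qed

end


theorem proposition5:
  fixes H :: "'d set" and s al :: "'d \<Rightarrow> 'd" and g :: "'d \<Rightarrow> nat" and h0 :: 'd
  assumes "cubic_ribbon H s al"
    and "admissible H s al g"
    and "H \<noteq> {}"
    and "ribbon_connected H s al"
    and "is_bridge H s al h0"
    and "g h0 = 0"
    and "al h0 \<notin> {h0, s h0, s (s h0)}"
  shows "unitary H s al {} g =
      unitary (piece_darts H s al h0 h0) s (piece_al s al h0) (piece_circles s al h0) g *
      unitary (piece_darts H s al h0 (al h0)) s (piece_al s al (al h0)) (piece_circles s al (al h0)) g *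
      delta s al g h0 * delta s al g (al h0)"
proof -
  interpret bs H s al g h0
    using assms(1,2,4,5,6,7) by unfold_locales
  show ?thesis by (rule main)
qed

end
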